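(* Assume Condition 1 below. Suppose $\|\hat Q_{-k}-Q\|_{L^2(P)}\to0$ in probability for each $k\in\{1,\dots,K\}$. Then $\|\hat Q-Q\|_{L^2(\mathbb P_n)}=o_P(1)$ and $\frac1n\sum_{i=1}^n\hat Q_iZ_i/\hat e(X_i)=\mathbb E[Q(X)]+o_P(1)$.
   Context: $(X_i,Y_i,Z_i)$, $i\le n$, i.i.d. from $P$; $e(x)=P(Z=1\mid X=x)$; $Q(x)$ is the conditional $\tau$-quantile of $Y$ given $X=x,Z=1$. Cross-fitting: the indices are partitioned into a fixed number $K$ of folds $\mathcal F_1,\dots,\mathcal F_K$ of approximately equal size; $\hat Q_{-k}$ is a function $\mathcal X\to\mathbb R$ estimated using only observations not in $\mathcal F_k$; $\hat Q_i=\hat Q_{-k}(X_i)$ for $i\in\mathcal F_k$. $\|\hat Q_{-k}-Q\|_{L^2(P)}^2=\int(\hat Q_{-k}(x)-Q(x))^2\,dP_X(x)$ (with $\hat Q_{-k}$ held fixed), and $\|\hat Q-Q\|_{L^2(\mathbb P_n)}^2=\frac1n\sum_i(\hat Q_i-Q(X_i))^2$. Condition 1: $\varepsilon\le e(X)\le1-\varepsilon$ a.s. for some $\varepsilon>0$, the propensity estimate $\hat e$ (computed from $\{(X_i,Z_i)\}$) satisfies $\sup_x|\hat e(x)-e(x)|\to0$ in probability, and $\mathrm{Var}(Y)<\infty$. *)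

theory Defs
  imports "HOL-Probability.Probability"
begin

definition gen_sigma :: "'a measure \<Rightarrow> (nat \<Rightarrow> 'a \<Rightarrow> 'b) \<Rightarrow> 'b measure \<Rightarrow> nat set \<Rightarrow> 'a measure" where
  "gen_sigma M W N I = sigma (space M) (\<Union>i\<in>I. {W i -` A \<inter> space M | A. A \<in> sets N})"

definition conv_in_prob :: "'a measure \<Rightarrow> (nat \<Rightarrow> 'a \<Rightarrow> real) \<Rightarrow> real \<Rightarrow> bool" where
  "conv_in_prob M Xn c \<longleftrightarrow>
     (\<forall>\<delta>>0. (\<lambda>n. measure M {\<omega>\<in>space M. \<delta> < \<bar>Xn n \<omega> - c\<bar>}) \<longlonglongrightarrow> 0)"

text \<open>e is (a version of) the propensity score x \<mapsto> P(Z = 1 | X = x).\<close>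
definition is_propensity :: "'a measure \<Rightarrow> 'x measure \<Rightarrow> ('a \<Rightarrow> 'x) \<Rightarrow> ('a \<Rightarrow> real) \<Rightarrow> ('x \<Rightarrow> real) \<Rightarrow> bool" where
  "is_propensity M MX X Z e \<longleftrightarrow> e \<in> borel_measurable MX \<and>
     (\<forall>A\<in>sets MX. measure M {\<omega>\<in>space M. X \<omega> \<in> A \<and> Z \<omega> = 1}
        = (\<integral>\<omega>. indicator (X -` A \<inter> space M) \<omega> * e (X \<omega>) \<partial>M))"

text \<open>kappa is a regular conditional distribution of Y given X = x, Z = 1.\<close>
definition is_cond_dist_kernel :: "'a measure \<Rightarrow> 'x measure \<Rightarrow> ('a \<Rightarrow> 'x) \<Rightarrow> ('a \<Rightarrow> real) \<Rightarrow> ('a \<Rightarrow> real)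
     \<Rightarrow> ('x \<Rightarrow> real measure) \<Rightarrow> bool" where
  "is_cond_dist_kernel M MX X Y Z \<kappa> \<longleftrightarrow> \<kappa> \<in> MX \<rightarrow>\<^sub>M prob_algebra borel \<and>
     (\<forall>A\<in>sets MX. \<forall>B\<in>sets borel.
        measure M {\<omega>\<in>space M. X \<omega> \<in> A \<and> Z \<omega> = 1 \<and> Y \<omega> \<in> B}
        = (\<integral>\<omega>. indicator (X -` A \<inter> space M) \<omega> * indicator {1} (Z \<omega>) * measure (\<kappa> (X \<omega>)) B \<partial>M))"

definition quantile :: "real measure \<Rightarrow> real \<Rightarrow> real" where
  "quantile \<mu> \<tau> = Inf {y. \<tau> \<le> measure \<mu> {..y}}"

definition cond_quantile :: "('x \<Rightarrow> real measure) \<Rightarrow> real \<Rightarrow> 'x \<Rightarrow> real" where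
  "cond_quantile \<kappa> \<tau> x = quantile (\<kappa> x) \<tau>"

end

theory Submission
  imports Defs
begin

lemma gen_sigma_facts:
  assumes Wm: "\<And>i. W i \<in> M \<rightarrow>\<^sub>M N"
  shows "space (gen_sigma M W N I) = space M"
    and "sets (gen_sigma M W N I) = sigma_sets (space M) (\<Union>i\<in>I. {W i -` A \<inter> space M | A. A \<in> sets N})"
    and "sets (gen_sigma M W N I) \<subseteq> sets M"
    and "subalgebra M (gen_sigma M W N I)"
proof -
  have G: "(\<Union>i\<in>I. {W i -` A \<inter> space M | A. A \<in> sets N}) \<subseteq> Pow (space M)" by auto
  show S: "space (gen_sigma M W N I) = space M"
    unfolding gen_sigma_def using G by (simp add: space_measure_of_conv)
  show T: "sets (gen_sigma M W N I) = sigma_sets (space M) (\<Union>i\<in>I. {W i -` A \<inter> space M | A. A \<in> sets N})"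
    unfolding gen_sigma_def using G by (simp add: sets_measure_of_conv)
  have "(\<Union>i\<in>I. {W i -` A \<inter> space M | A. A \<in> sets N}) \<subseteq> sets M"
    using Wm by (auto intro: measurable_sets)
  then show U: "sets (gen_sigma M W N I) \<subseteq> sets M"
    unfolding T by (rule sets.sigma_sets_subset)
  show "subalgebra M (gen_sigma M W N I)" using S U by (simp add: subalgebra_def)
qed

lemma indep_gen_sigma:
  assumes M: "prob_space M"
    and Wm: "\<And>i. W i \<in> M \<rightarrow>\<^sub>M N"
    and ind: "prob_space.indep_vars M (\<lambda>_. N) W UNIV"
    and i: "i \<notin> I"
    and A: "A \<in> sets (gen_sigma M W N I)" and B: "B \<in> sets N"
  shows "measure M (A \<inter> (W i -` B \<inter> space M)) = measure M A * measure M (W i -` B \<inter> space M)"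
proof -
  interpret prob_space M by fact
  let ?E = "\<lambda>j. {W j -` A \<inter> space M | A. A \<in> sets N}"
  let ?I = "case_bool I {i}"
  have E: "indep_sets ?E UNIV" using ind unfolding indep_vars_def2 by auto
  have "indep_sets (\<lambda>b. sigma_sets (space M) (\<Union>j\<in>?I b. ?E j)) UNIV"
  proof (rule indep_sets_collect_sigma)
    show "indep_sets ?E (\<Union>j\<in>UNIV. ?I j)" using E by (rule indep_sets_mono_index[rotated]) auto
    show "Int_stable (?E j)" for j
    proof (rule Int_stableI)
      fix a b assume "a \<in> ?E j" "b \<in> ?E j"
      then obtain A1 B1 where "a = W j -` A1 \<inter> space M" "A1 \<in> sets N" "b = W j -` B1 \<inter> space M" "B1 \<in> sets N" by auto
      then show "a \<inter> b \<in> ?E j" by (intro CollectI exI[of _ "A1 \<inter> B1"]) auto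
    qed
    show "disjoint_family_on ?I UNIV" using i
      by (auto simp: disjoint_family_on_def split: bool.splits)
  qed
  then have "prob (\<Inter>b\<in>UNIV. case_bool A (W i -` B \<inter> space M) b) =
     (\<Prod>b\<in>UNIV. prob (case_bool A (W i -` B \<inter> space M) b))"
  proof (rule indep_setsD)
    show "\<forall>b\<in>UNIV. case_bool A (W i -` B \<inter> space M) b \<in> sigma_sets (space M) (\<Union>j\<in>?I b. ?E j)"
    proof
      fix b :: bool show "case_bool A (W i -` B \<inter> space M) b \<in> sigma_sets (space M) (\<Union>j\<in>?I b. ?E j)"
      proof (cases b)
        case True then show ?thesis using A gen_sigma_facts(2)[OF Wm] by simp
      next
        case False then show ?thesis using B by (auto intro!: sigma_sets.Basic)
      qed
    qed
  qed auto
  then show ?thesis by (simp add: UNIV_bool Int_commute)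
qed

lemma indep_fubini:
  fixes g :: "'a \<Rightarrow> 'x \<Rightarrow> ennreal"
  assumes M: "prob_space M"
    and Wm: "\<And>i. W i \<in> M \<rightarrow>\<^sub>M N"
    and ind: "prob_space.indep_vars M (\<lambda>_. N) W UNIV"
    and i: "i \<notin> I"
    and f: "f \<in> N \<rightarrow>\<^sub>M MX"
    and g: "(\<lambda>(\<omega>, x). g \<omega> x) \<in> borel_measurable (gen_sigma M W N I \<Otimes>\<^sub>M MX)"
  shows "(\<integral>\<^sup>+\<omega>. g \<omega> (f (W i \<omega>)) \<partial>M) = (\<integral>\<^sup>+\<omega>. (\<integral>\<^sup>+x. g \<omega> x \<partial>distr M MX (\<lambda>\<omega>. f (W i \<omega>))) \<partial>M)"
proof -
  interpret prob_space M by fact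
  define F where "F = gen_sigma M W N I"
  define R where "R = restr_to_subalg M F"
  define D where "D = distr M MX (\<lambda>\<omega>. f (W i \<omega>))"
  have sub: "subalgebra M F" unfolding F_def by (rule gen_sigma_facts(4)[OF Wm])
  have sR: "sets R = sets F" unfolding R_def by (rule sets_restr_to_subalg[OF sub])
  have spR: "space R = space M" unfolding R_def by (rule space_restr_to_subalg)
  have fW: "(\<lambda>\<omega>. f (W i \<omega>)) \<in> M \<rightarrow>\<^sub>M MX" using Wm f by measurable
  interpret R: prob_space R unfolding R_def by (rule prob_space_restr_to_subalg[OF sub M])
  interpret D: prob_space D unfolding D_def by (rule prob_space_distr[OF fW])
  have idm: "(\<lambda>\<omega>. \<omega>) \<in> M \<rightarrow>\<^sub>M R"
    using sub sR spR by (auto simp: measurable_def subalgebra_def)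
  have Phi: "(\<lambda>\<omega>. (\<omega>, f (W i \<omega>))) \<in> M \<rightarrow>\<^sub>M R \<Otimes>\<^sub>M D"
    using idm fW by (auto intro!: measurable_Pair simp: D_def)
  have eq: "R \<Otimes>\<^sub>M D = distr M (R \<Otimes>\<^sub>M D) (\<lambda>\<omega>. (\<omega>, f (W i \<omega>)))"
  proof (rule pair_measure_eqI)
    show "sigma_finite_measure R" "sigma_finite_measure D" by unfold_locales
    show "sets (R \<Otimes>\<^sub>M D) = sets (distr M (R \<Otimes>\<^sub>M D) (\<lambda>\<omega>. (\<omega>, f (W i \<omega>))))" by simp
    fix A B assume A: "A \<in> sets R" and B: "B \<in> sets D"
    have AF: "A \<in> sets (gen_sigma M W N I)" using A sR F_def by simp
    have AM: "A \<in> sets M" using AF sub by (auto simp: subalgebra_def F_def)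
    have BX: "B \<in> sets MX" using B by (simp add: D_def)
    have B': "f -` B \<inter> space N \<in> sets N" using f BX by (rule measurable_sets)
    have pre: "(\<lambda>\<omega>. (\<omega>, f (W i \<omega>))) -` (A \<times> B) \<inter> space M = A \<inter> (W i -` (f -` B \<inter> space N) \<inter> space M)"
      using AM sets.sets_into_space[OF AM] Wm[of i] by (auto simp: measurable_def)
    have preB: "(\<lambda>\<omega>. f (W i \<omega>)) -` B \<inter> space M = W i -` (f -` B \<inter> space N) \<inter> space M"
      using Wm[of i] by (auto simp: measurable_def)
    have "emeasure (distr M (R \<Otimes>\<^sub>M D) (\<lambda>\<omega>. (\<omega>, f (W i \<omega>)))) (A \<times> B)
        = emeasure M (A \<inter> (W i -` (f -` B \<inter> space N) \<inter> space M))"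
      using A B Phi by (subst emeasure_distr) (auto simp: pre)
    also have "\<dots> = ennreal (measure M A * measure M (W i -` (f -` B \<inter> space N) \<inter> space M))"
      using indep_gen_sigma[OF M Wm ind i AF B'] by (simp add: emeasure_eq_measure)
    also have "\<dots> = emeasure R A * emeasure D B"
      using A B AF sub fW
      by (simp add: R_def D_def emeasure_restr_to_subalg F_def emeasure_distr preB emeasure_eq_measure ennreal_mult)
    finally show "emeasure R A * emeasure D B = emeasure (distr M (R \<Otimes>\<^sub>M D) (\<lambda>\<omega>. (\<omega>, f (W i \<omega>)))) (A \<times> B)" by simp
  qed
  have gm: "(\<lambda>(\<omega>, x). g \<omega> x) \<in> borel_measurable (R \<Otimes>\<^sub>M D)"
    using g by (simp add: measurable_cong_sets[OF sets_pair_measure_cong[OF sR[unfolded F_def]] refl] D_def)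
  have "(\<integral>\<^sup>+\<omega>. g \<omega> (f (W i \<omega>)) \<partial>M) = integral\<^sup>N (distr M (R \<Otimes>\<^sub>M D) (\<lambda>\<omega>. (\<omega>, f (W i \<omega>)))) (\<lambda>(\<omega>, x). g \<omega> x)"
    using Phi gm by (subst nn_integral_distr) auto
  also have "\<dots> = integral\<^sup>N (R \<Otimes>\<^sub>M D) (\<lambda>(\<omega>, x). g \<omega> x)" using eq by simp
  also have "\<dots> = (\<integral>\<^sup>+\<omega>. (\<integral>\<^sup>+x. g \<omega> x \<partial>D) \<partial>R)"
    using D.nn_integral_fst[OF gm] by simp
  also have "\<dots> = (\<integral>\<^sup>+\<omega>. (\<integral>\<^sup>+x. g \<omega> x \<partial>D) \<partial>M)"
  proof (rule nn_integral_subalgebra)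
    show "(\<lambda>\<omega>. \<integral>\<^sup>+x. g \<omega> x \<partial>D) \<in> borel_measurable R" using gm by measurable
    show "sets R \<subseteq> sets M" using sR sub by (simp add: subalgebra_def)
    show "space R = space M" by (rule spR)
    show "\<And>A. A \<in> sets R \<Longrightarrow> emeasure R A = emeasure M A"
      using sR sub by (simp add: R_def emeasure_restr_to_subalg)
  qed
  finally show ?thesis by (simp add: D_def)
qed

lemma gen_sigma_comp_meas:
  fixes h :: "'a \<Rightarrow> 'x \<Rightarrow> 'c::topological_space"
  assumes Wm: "\<And>i. W i \<in> M \<rightarrow>\<^sub>M N"
    and h: "(\<lambda>(\<omega>, x). h \<omega> x) \<in> borel_measurable (gen_sigma M W N I \<Otimes>\<^sub>M MX)"
    and Xf: "Xf \<in> M \<rightarrow>\<^sub>M MX"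
  shows "(\<lambda>\<omega>. h \<omega> (Xf \<omega>)) \<in> borel_measurable M"
proof -
  have sub: "subalgebra M (gen_sigma M W N I)" by (rule gen_sigma_facts(4)[OF Wm])
  have idm: "(\<lambda>\<omega>. \<omega>) \<in> M \<rightarrow>\<^sub>M gen_sigma M W N I"
    using sub by (auto simp: measurable_def subalgebra_def)
  have "(\<lambda>\<omega>. (\<omega>, Xf \<omega>)) \<in> M \<rightarrow>\<^sub>M gen_sigma M W N I \<Otimes>\<^sub>M MX"
    using idm Xf by (rule measurable_Pair)
  from measurable_compose[OF this h] show ?thesis by simp
qed

lemma gen_sigma_to_M:
  assumes Wm: "\<And>i. W i \<in> M \<rightarrow>\<^sub>M N" and h: "h \<in> gen_sigma M W N I \<rightarrow>\<^sub>M K"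
  shows "h \<in> M \<rightarrow>\<^sub>M K"
  using measurable_from_subalg[OF gen_sigma_facts(4)[OF Wm] h] .

lemma emeasure_Markov_simple:
  fixes u :: "'a \<Rightarrow> ennreal"
  assumes u: "u \<in> borel_measurable M"
  shows "ennreal c * emeasure M {x\<in>space M. ennreal c \<le> u x} \<le> (\<integral>\<^sup>+x. u x \<partial>M)"
proof -
  have S: "{x\<in>space M. ennreal c \<le> u x} \<in> sets M" using u by measurable
  have "ennreal c * emeasure M {x\<in>space M. ennreal c \<le> u x} = (\<integral>\<^sup>+x. ennreal c * indicator {x\<in>space M. ennreal c \<le> u x} x \<partial>M)"
    using S by (simp add: nn_integral_cmult_indicator)
  also have "\<dots> \<le> (\<integral>\<^sup>+x. u x \<partial>M)"
    by (intro nn_integral_mono) (auto split: split_indicator)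
  finally show ?thesis .
qed

lemma measure_le_from_emeasure:
  assumes "ennreal c * emeasure M A \<le> ennreal r" "0 < c" "0 \<le> r"
  shows "measure M A \<le> r / c"
proof -
  have "emeasure M A \<le> ennreal (r / c)"
    using assms
    by (metis divide_ennreal ennreal_mult_le_mult_iff ennreal_eq_0_iff ennreal_neq_top
        ennreal_times_divide mult.commute not_less order.strict_iff_not mult_divide_eq_ennreal)
  then show ?thesis unfolding measure_def using assms
    by (simp add: enn2real_leI)
qed

lemma cip_I:
  assumes "\<And>\<delta> \<eta>. \<delta> > 0 \<Longrightarrow> \<eta> > 0 \<Longrightarrow>
     eventually (\<lambda>n. measure M {\<omega>\<in>space M. \<delta> < \<bar>Xn n \<omega> - c\<bar>} \<le> \<eta>) sequentially"
  shows "conv_in_prob M Xn c"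
  unfolding conv_in_prob_def
proof (intro allI impI)
  fix \<delta> :: real assume d: "\<delta> > 0"
  show "(\<lambda>n. measure M {\<omega>\<in>space M. \<delta> < \<bar>Xn n \<omega> - c\<bar>}) \<longlonglongrightarrow> 0"
  proof (rule order_tendstoI)
    fix a :: real assume "a < 0"
    then show "eventually (\<lambda>n. a < measure M {\<omega>\<in>space M. \<delta> < \<bar>Xn n \<omega> - c\<bar>}) sequentially"
      by (intro always_eventually allI less_le_trans[OF _ measure_nonneg]) auto
  next
    fix a :: real assume a: "0 < a"
    have "eventually (\<lambda>n. measure M {\<omega>\<in>space M. \<delta> < \<bar>Xn n \<omega> - c\<bar>} \<le> a/2) sequentially"
      using assms[of \<delta> "a/2"] d a by simp
    then show "eventually (\<lambda>n. measure M {\<omega>\<in>space M. \<delta> < \<bar>Xn n \<omega> - c\<bar>} < a) sequentially"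
      by eventually_elim (use a in auto)
  qed
qed

lemma cip_D:
  assumes "conv_in_prob M Xn c" "\<delta> > 0" "\<eta> > 0"
  shows "eventually (\<lambda>n. measure M {\<omega>\<in>space M. \<delta> < \<bar>Xn n \<omega> - c\<bar>} < \<eta>) sequentially"
  using assms unfolding conv_in_prob_def by (auto dest!: order_tendstoD(2))

lemma tendsto0_D:
  assumes "(f \<longlongrightarrow> (0::real)) sequentially" "\<eta> > 0"
  shows "eventually (\<lambda>n. f n < \<eta>) sequentially"
  using assms by (auto dest!: order_tendstoD(2))

lemma tendsto1_D:
  assumes "(f \<longlongrightarrow> (1::real)) sequentially" "\<eta> > 0"
  shows "eventually (\<lambda>n. 1 - f n < \<eta>) sequentially"
proof -
  have "eventually (\<lambda>n. 1 - \<eta> < f n) sequentially" using assms by (auto dest!: order_tendstoD(1))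
  then show ?thesis by eventually_elim auto
qed

lemma fold_cip:
  fixes H :: "nat \<Rightarrow> 'a \<Rightarrow> 'x \<Rightarrow> real"
  assumes M: "prob_space M"
    and Wm: "\<And>i. W i \<in> M \<rightarrow>\<^sub>M N"
    and ind: "prob_space.indep_vars M (\<lambda>_. N) W UNIV"
    and f: "f \<in> N \<rightarrow>\<^sub>M MX"
    and ident: "\<And>i. distr M MX (\<lambda>\<omega>. f (W i \<omega>)) = PX"
    and Hm: "\<And>n. (\<lambda>(\<omega>, x). H n \<omega> x) \<in> borel_measurable (gen_sigma M W N (J n) \<Otimes>\<^sub>M MX)"
    and Hnn: "\<And>n \<omega> x. 0 \<le> H n \<omega> x"
    and S: "\<And>n. S n \<subseteq> {..<n}" and SJ: "\<And>n i. i \<in> S n \<Longrightarrow> i \<notin> J n"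
    and L2: "\<And>\<delta>. \<delta> > 0 \<Longrightarrow> (\<lambda>n. measure M {\<omega>\<in>space M. ennreal \<delta> < (\<integral>\<^sup>+x. ennreal (H n \<omega> x) \<partial>PX)}) \<longlonglongrightarrow> 0"
  shows "conv_in_prob M (\<lambda>n \<omega>. (1 / real n) * (\<Sum>i\<in>S n. H n \<omega> (f (W i \<omega>)))) 0"
proof (rule cip_I)
  interpret prob_space M by fact
  have subF: "subalgebra M (gen_sigma M W N I)" for I by (rule gen_sigma_facts(4), rule Wm)
  have spF: "space (gen_sigma M W N I) = space M" for I using subF[of I] by (simp add: subalgebra_def)
  have fW: "\<And>i. (\<lambda>\<omega>. f (W i \<omega>)) \<in> M \<rightarrow>\<^sub>M MX" using Wm f by measurable
  interpret PX: prob_space PX unfolding ident[symmetric, of 0] by (rule prob_space_distr[OF fW])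
  have sPX: "sets PX = sets MX" unfolding ident[symmetric, of 0] by simp
  fix \<delta> \<eta> :: real assume d: "\<delta> > 0" and e: "\<eta> > 0"
  define \<theta> where "\<theta> = \<eta> * \<delta> / 2"
  have th: "\<theta> > 0" using d e by (simp add: \<theta>_def)
  define D where "D n \<omega> = (\<integral>\<^sup>+x. ennreal (H n \<omega> x) \<partial>PX)" for n \<omega>
  have Dm: "D n \<in> borel_measurable (gen_sigma M W N (J n))" for n
  proof -
    have "(\<lambda>(\<omega>, x). ennreal (H n \<omega> x)) \<in> borel_measurable (gen_sigma M W N (J n) \<Otimes>\<^sub>M PX)"
      using Hm[of n] by (simp add: measurable_cong_sets[OF sets_pair_measure_cong[OF refl sPX] refl])
    then show ?thesis unfolding D_def by (rule PX.borel_measurable_nn_integral)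
  qed
  have DmM: "D n \<in> borel_measurable M" for n using measurable_from_subalg[OF subF Dm] .
  have "eventually (\<lambda>n. measure M {\<omega>\<in>space M. ennreal \<theta> < D n \<omega>} < \<eta>/2) sequentially"
    using tendsto0_D[OF L2[OF th], of "\<eta>/2"] e by (simp add: D_def)
  then show "eventually (\<lambda>n. measure M {\<omega>\<in>space M. \<delta> < \<bar>(1 / real n) * (\<Sum>i\<in>S n. H n \<omega> (f (W i \<omega>))) - 0\<bar>} \<le> \<eta>) sequentially"
  proof eventually_elim
    fix n assume n: "measure M {\<omega>\<in>space M. ennreal \<theta> < D n \<omega>} < \<eta>/2"
    define T where "T \<omega> = (1 / real n) * (\<Sum>i\<in>S n. H n \<omega> (f (W i \<omega>)))" for \<omega>
    define G where "G = {\<omega>\<in>space M. D n \<omega> \<le> ennreal \<theta>}"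
    define u where "u \<omega> = ennreal (T \<omega>) * indicator G \<omega>" for \<omega>
    have finS: "finite (S n)" using S[of n] finite_subset by blast
    have cardS: "real (card (S n)) \<le> real n"
      using card_mono[OF _ S[of n]] by simp
    have Tnn: "0 \<le> T \<omega>" for \<omega> unfolding T_def using Hnn by (intro mult_nonneg_nonneg sum_nonneg) auto
    have Gm: "G \<in> sets (gen_sigma M W N (J n))"
    proof -
      have "G = {\<omega>\<in>space (gen_sigma M W N (J n)). D n \<omega> \<le> ennreal \<theta>}"
        unfolding G_def using spF by simp
      also have "\<dots> = D n -` {..ennreal \<theta>} \<inter> space (gen_sigma M W N (J n))" by auto
      also have "\<dots> \<in> sets (gen_sigma M W N (J n))" by (rule measurable_sets[OF Dm]) simp
      finally show ?thesis .
    qed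
    have GM: "G \<in> sets M" using Gm subF[of "J n"] by (auto simp: subalgebra_def)
    have Hi: "(\<lambda>\<omega>. H n \<omega> (f (W i \<omega>))) \<in> borel_measurable M" for i
      by (rule gen_sigma_comp_meas[OF Wm Hm fW])
    have Tm: "T \<in> borel_measurable M" unfolding T_def using Hi by measurable
    have um: "u \<in> borel_measurable M" unfolding u_def using Tm GM by measurable
    have int_i: "(\<integral>\<^sup>+\<omega>. ennreal (H n \<omega> (f (W i \<omega>))) * indicator G \<omega> \<partial>M) \<le> ennreal \<theta>" if i: "i \<in> S n" for i
    proof -
      have gm: "(\<lambda>(\<omega>, x). ennreal (H n \<omega> x) * indicator G \<omega>) \<in> borel_measurable (gen_sigma M W N (J n) \<Otimes>\<^sub>M MX)"
        using Hm[of n] Gm by measurable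
      have "(\<integral>\<^sup>+\<omega>. ennreal (H n \<omega> (f (W i \<omega>))) * indicator G \<omega> \<partial>M)
          = (\<integral>\<^sup>+\<omega>. (\<integral>\<^sup>+x. ennreal (H n \<omega> x) * indicator G \<omega> \<partial>distr M MX (\<lambda>\<omega>. f (W i \<omega>))) \<partial>M)"
        using indep_fubini[OF M Wm ind SJ[OF i] f gm] by simp
      also have "\<dots> = (\<integral>\<^sup>+\<omega>. D n \<omega> * indicator G \<omega> \<partial>M)"
        unfolding ident D_def by (intro nn_integral_cong) (simp split: split_indicator)
      also have "\<dots> \<le> (\<integral>\<^sup>+\<omega>. ennreal \<theta> \<partial>M)"
        by (intro nn_integral_mono) (auto simp: G_def split: split_indicator)
      also have "\<dots> = ennreal \<theta>" by (simp add: emeasure_space_1)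
      finally show ?thesis .
    qed
    have "(\<integral>\<^sup>+\<omega>. u \<omega> \<partial>M) = (\<integral>\<^sup>+\<omega>. (\<Sum>i\<in>S n. ennreal (1 / real n) * (ennreal (H n \<omega> (f (W i \<omega>))) * indicator G \<omega>)) \<partial>M)"
    proof (intro nn_integral_cong)
      fix \<omega>
      have "ennreal (T \<omega>) = (\<Sum>i\<in>S n. ennreal (1 / real n) * ennreal (H n \<omega> (f (W i \<omega>))))"
      proof -
        have "(\<Sum>i\<in>S n. ennreal (1 / real n) * ennreal (H n \<omega> (f (W i \<omega>))))
            = (\<Sum>i\<in>S n. ennreal (1 / real n * H n \<omega> (f (W i \<omega>))))"
          using Hnn by (intro sum.cong refl) (simp add: ennreal_mult[symmetric] del: ennreal_mult'')
        also have "\<dots> = ennreal (\<Sum>i\<in>S n. 1 / real n * H n \<omega> (f (W i \<omega>)))"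
          using Hnn by (intro sum_ennreal) simp
        finally show ?thesis unfolding T_def sum_distrib_left by simp
      qed
      then show "u \<omega> = (\<Sum>i\<in>S n. ennreal (1 / real n) * (ennreal (H n \<omega> (f (W i \<omega>))) * indicator G \<omega>))"
        unfolding u_def by (simp add: sum_distrib_right mult.assoc)
    qed
    also have "\<dots> = (\<Sum>i\<in>S n. ennreal (1 / real n) * (\<integral>\<^sup>+\<omega>. ennreal (H n \<omega> (f (W i \<omega>))) * indicator G \<omega> \<partial>M))"
      using Hi GM by (subst nn_integral_sum) (auto simp: nn_integral_cmult)
    also have "\<dots> \<le> (\<Sum>i\<in>S n. ennreal (1 / real n) * ennreal \<theta>)"
      by (intro sum_mono mult_left_mono int_i) auto
    also have "\<dots> = ennreal (real (card (S n)) / real n * \<theta>)"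
      using th by (simp add: ennreal_mult[symmetric] ennreal_of_nat_eq_real_of_nat)
    also have "\<dots> \<le> ennreal \<theta>"
    proof (intro ennreal_leI)
      have "real (card (S n)) / real n \<le> 1"
        using cardS by (cases "n = 0") auto
      then show "real (card (S n)) / real n * \<theta> \<le> \<theta>" using th mult_right_mono[of "real (card (S n)) / real n" 1 \<theta>] by simp
    qed
    finally have ub: "(\<integral>\<^sup>+\<omega>. u \<omega> \<partial>M) \<le> ennreal \<theta>" .
    define B2 where "B2 = {\<omega>\<in>space M. ennreal \<delta> \<le> u \<omega>}"
    have B2m: "B2 \<in> sets M" unfolding B2_def using um by measurable
    have "ennreal \<delta> * emeasure M B2 \<le> ennreal \<theta>"
      unfolding B2_def using emeasure_Markov_simple[OF um, of \<delta>] ub by simp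
    then have mB2: "measure M B2 \<le> \<eta> / 2"
      using measure_le_from_emeasure[of \<delta> M B2 \<theta>] d th by (simp add: \<theta>_def)
    define B1 where "B1 = {\<omega>\<in>space M. ennreal \<theta> < D n \<omega>}"
    have B1m: "B1 \<in> sets M" unfolding B1_def using DmM by measurable
    have sub: "{\<omega>\<in>space M. \<delta> < \<bar>T \<omega> - 0\<bar>} \<subseteq> B1 \<union> B2"
    proof
      fix \<omega> assume w: "\<omega> \<in> {\<omega>\<in>space M. \<delta> < \<bar>T \<omega> - 0\<bar>}"
      show "\<omega> \<in> B1 \<union> B2"
      proof (cases "\<omega> \<in> G")
        case True
        then show ?thesis using w Tnn[of \<omega>] by (auto simp: B2_def u_def)
      next
        case False
        then show ?thesis using w by (auto simp: B1_def G_def)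
      qed
    qed
    have "measure M {\<omega>\<in>space M. \<delta> < \<bar>T \<omega> - 0\<bar>} \<le> measure M (B1 \<union> B2)"
      using sub B1m B2m by (intro finite_measure_mono) auto
    also have "\<dots> \<le> measure M B1 + measure M B2"
      using B1m B2m by (rule measure_Un_le)
    also have "\<dots> \<le> \<eta>" using n mB2 by (simp add: B1_def)
    finally show "measure M {\<omega>\<in>space M. \<delta> < \<bar>(1 / real n) * (\<Sum>i\<in>S n. H n \<omega> (f (W i \<omega>))) - 0\<bar>} \<le> \<eta>"
      by (simp add: T_def)
  qed
qed

lemma wlln:
  fixes V :: "nat \<Rightarrow> 'a \<Rightarrow> real"
  assumes M: "prob_space M"
    and ind: "prob_space.indep_vars M (\<lambda>_. borel) V UNIV"
    and ident: "\<And>i. distr M borel (V i) = distr M borel (V 0)"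
    and L2: "integrable M (\<lambda>\<omega>. (V 0 \<omega>)\<^sup>2)"
  shows "conv_in_prob M (\<lambda>n \<omega>. (1 / real n) * (\<Sum>i<n. V i \<omega>)) (\<integral>\<omega>. V 0 \<omega> \<partial>M)"
proof (rule cip_I)
  interpret prob_space M by fact
  have Vm[measurable]: "V i \<in> borel_measurable M" for i using ind by (auto simp: indep_vars_def)
  define m where "m = (\<integral>\<omega>. V 0 \<omega> \<partial>M)"
  define U where "U i \<omega> = V i \<omega> - m" for i \<omega>
  have Um[measurable]: "U i \<in> borel_measurable M" for i unfolding U_def by measurable
  have tr: "integrable M (\<lambda>\<omega>. g (V i \<omega>)) \<longleftrightarrow> integrable M (\<lambda>\<omega>. g (V 0 \<omega>))"
     "(\<integral>\<omega>. g (V i \<omega>) \<partial>M) = (\<integral>\<omega>. g (V 0 \<omega>) \<partial>M)"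
    if g: "g \<in> borel_measurable borel" for i and g :: "real \<Rightarrow> real"
  proof -
    have "integrable M (\<lambda>\<omega>. g (V i \<omega>)) \<longleftrightarrow> integrable (distr M borel (V i)) g"
      using g by (simp add: integrable_distr_eq)
    also have "\<dots> \<longleftrightarrow> integrable (distr M borel (V 0)) g" by (simp only: ident[of i])
    also have "\<dots> \<longleftrightarrow> integrable M (\<lambda>\<omega>. g (V 0 \<omega>))"
      using g by (simp add: integrable_distr_eq)
    finally show "integrable M (\<lambda>\<omega>. g (V i \<omega>)) \<longleftrightarrow> integrable M (\<lambda>\<omega>. g (V 0 \<omega>))" .
    have "(\<integral>\<omega>. g (V i \<omega>) \<partial>M) = (\<integral>x. g x \<partial>distr M borel (V i))"
      using g by (simp add: integral_distr)
    also have "\<dots> = (\<integral>x. g x \<partial>distr M borel (V 0))" by (simp only: ident[of i])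
    also have "\<dots> = (\<integral>\<omega>. g (V 0 \<omega>) \<partial>M)"
      using g by (simp add: integral_distr)
    finally show "(\<integral>\<omega>. g (V i \<omega>) \<partial>M) = (\<integral>\<omega>. g (V 0 \<omega>) \<partial>M)" .
  qed
  have I0: "integrable M (V 0)" using L2 square_integrable_imp_integrable[OF Vm L2] by simp
  have Ii: "integrable M (V i)" for i using tr(1)[of "\<lambda>x. x" i] I0 by simp
  have Ei: "(\<integral>\<omega>. V i \<omega> \<partial>M) = m" for i using tr(2)[of "\<lambda>x. x" i] by (simp add: m_def)
  define \<sigma>2 where "\<sigma>2 = (\<integral>\<omega>. (U 0 \<omega>)\<^sup>2 \<partial>M)"
  have sq: "(\<lambda>\<omega>. (U i \<omega>)\<^sup>2) = (\<lambda>\<omega>. (V i \<omega>)\<^sup>2 - 2 * m * V i \<omega> + m\<^sup>2)" for i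
    unfolding U_def by (auto simp: power2_eq_square algebra_simps)
  have L2i: "integrable M (\<lambda>\<omega>. (V i \<omega>)\<^sup>2)" for i using tr(1)[of "\<lambda>x. x\<^sup>2" i] L2 by simp
  have IUi2: "integrable M (\<lambda>\<omega>. (U i \<omega>)\<^sup>2)" for i
    unfolding sq using L2i Ii by auto
  have IUi: "integrable M (U i)" for i unfolding U_def using Ii by auto
  have EUi: "(\<integral>\<omega>. U i \<omega> \<partial>M) = 0" for i unfolding U_def using Ii Ei by (simp add: prob_space)
  have EUi2: "(\<integral>\<omega>. (U i \<omega>)\<^sup>2 \<partial>M) = \<sigma>2" for i
    unfolding \<sigma>2_def U_def using tr(2)[of "\<lambda>x. (x - m)\<^sup>2" i] by simp
  have indU: "indep_vars (\<lambda>_. borel) U UNIV"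
    using indep_vars_compose2[OF ind, of "\<lambda>_ x. x - m" "\<lambda>_. borel"] by (simp add: U_def[abs_def])
  have cross: "integrable M (\<lambda>\<omega>. U i \<omega> * U j \<omega>) \<and> (\<integral>\<omega>. U i \<omega> * U j \<omega> \<partial>M) = (if i = j then \<sigma>2 else 0)" for i j
  proof (cases "i = j")
    case True
    then show ?thesis using IUi2[of i] EUi2[of i] by (simp add: power2_eq_square)
  next
    case False
    have ij: "indep_vars (\<lambda>_. borel) U {i, j}" by (rule indep_vars_subset[OF indU]) auto
    have p: "(\<lambda>\<omega>. \<Prod>l\<in>{i,j}. U l \<omega>) = (\<lambda>\<omega>. U i \<omega> * U j \<omega>)" using False by auto
    have "integrable M (\<lambda>\<omega>. \<Prod>l\<in>{i,j}. U l \<omega>)"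
      by (rule indep_vars_integrable) (use ij IUi in auto)
    moreover have "(\<integral>\<omega>. (\<Prod>l\<in>{i,j}. U l \<omega>) \<partial>M) = (\<Prod>l\<in>{i,j}. \<integral>\<omega>. U l \<omega> \<partial>M)"
      by (rule indep_vars_lebesgue_integral) (use ij IUi in auto)
    ultimately show ?thesis using False p EUi by simp
  qed
  have var: "(\<integral>\<omega>. (\<Sum>i<n. U i \<omega>)\<^sup>2 \<partial>M) = real n * \<sigma>2" and Ivar: "integrable M (\<lambda>\<omega>. (\<Sum>i<n. U i \<omega>)\<^sup>2)" for n
  proof -
    have e: "(\<lambda>\<omega>. (\<Sum>i<n. U i \<omega>)\<^sup>2) = (\<lambda>\<omega>. \<Sum>i<n. \<Sum>j<n. U i \<omega> * U j \<omega>)"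
      by (simp add: power2_eq_square sum_product)
    show "integrable M (\<lambda>\<omega>. (\<Sum>i<n. U i \<omega>)\<^sup>2)" unfolding e using cross by auto
    have "(\<integral>\<omega>. (\<Sum>i<n. U i \<omega>)\<^sup>2 \<partial>M) = (\<Sum>i<n. \<Sum>j<n. \<integral>\<omega>. U i \<omega> * U j \<omega> \<partial>M)"
      unfolding e using cross by (simp add: Bochner_Integration.integral_sum)
    also have "\<dots> = (\<Sum>i<n. \<Sum>j<n. if i = j then \<sigma>2 else 0)"
      using cross by (intro sum.cong refl) blast
    also have "\<dots> = (\<Sum>i<n. \<sigma>2)" by (simp add: sum.delta)
    finally show "(\<integral>\<omega>. (\<Sum>i<n. U i \<omega>)\<^sup>2 \<partial>M) = real n * \<sigma>2" by simp
  qed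
  have s2: "0 \<le> \<sigma>2" unfolding \<sigma>2_def by simp
  fix \<delta> \<eta> :: real assume d: "\<delta> > 0" and e: "\<eta> > 0"
  obtain N :: nat where N: "\<sigma>2 / (\<delta>\<^sup>2 * \<eta>) < real N" using reals_Archimedean2 by blast
  show "eventually (\<lambda>n. measure M {\<omega>\<in>space M. \<delta> < \<bar>(1 / real n) * (\<Sum>i<n. V i \<omega>) - (\<integral>\<omega>. V 0 \<omega> \<partial>M)\<bar>} \<le> \<eta>) sequentially"
  proof (rule eventually_sequentiallyI[of "Suc N"])
    fix n assume n: "Suc N \<le> n"
    then have npos: "0 < real n" by simp
    have sub: "{\<omega>\<in>space M. \<delta> < \<bar>(1 / real n) * (\<Sum>i<n. V i \<omega>) - (\<integral>\<omega>. V 0 \<omega> \<partial>M)\<bar>}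
        \<subseteq> {\<omega>\<in>space M. (real n * \<delta>)\<^sup>2 \<le> (\<Sum>i<n. U i \<omega>)\<^sup>2}"
    proof safe
      fix \<omega> assume w: "\<delta> < \<bar>(1 / real n) * (\<Sum>i<n. V i \<omega>) - (\<integral>\<omega>. V 0 \<omega> \<partial>M)\<bar>"
      have "(\<Sum>i<n. U i \<omega>) = (\<Sum>i<n. V i \<omega>) - real n * m" unfolding U_def by (simp add: sum_subtractf)
      also have "\<dots> = real n * ((1 / real n) * (\<Sum>i<n. V i \<omega>) - m)" using npos by (simp add: field_simps)
      finally have "\<bar>\<Sum>i<n. U i \<omega>\<bar> = real n * \<bar>(1 / real n) * (\<Sum>i<n. V i \<omega>) - m\<bar>"
        using npos by (simp add: abs_mult)
      then have "real n * \<delta> \<le> \<bar>\<Sum>i<n. U i \<omega>\<bar>" using w npos by (simp add: m_def)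
      then show "(real n * \<delta>)\<^sup>2 \<le> (\<Sum>i<n. U i \<omega>)\<^sup>2"
        using d npos by (metis abs_le_square_iff abs_of_pos mult_pos_pos)
    qed
    have "measure M {\<omega>\<in>space M. \<delta> < \<bar>(1 / real n) * (\<Sum>i<n. V i \<omega>) - (\<integral>\<omega>. V 0 \<omega> \<partial>M)\<bar>}
        \<le> measure M {\<omega>\<in>space M. (real n * \<delta>)\<^sup>2 \<le> (\<Sum>i<n. U i \<omega>)\<^sup>2}"
      by (rule finite_measure_mono[OF sub]) measurable
    also have "\<dots> \<le> (\<integral>\<omega>. (\<Sum>i<n. U i \<omega>)\<^sup>2 \<partial>M) / (real n * \<delta>)\<^sup>2"
      by (rule integral_Markov_inequality_measure[OF Ivar]) (use d npos in auto)
    also have "\<dots> = \<sigma>2 / (real n * \<delta>\<^sup>2)" using npos by (simp only: var) (simp add: power2_eq_square)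
    also have "\<dots> \<le> \<eta>"
    proof -
      have "\<sigma>2 / (\<delta>\<^sup>2 * \<eta>) < real n" using N n by linarith
      then have "\<sigma>2 < real n * (\<delta>\<^sup>2 * \<eta>)" using d e by (simp add: divide_less_eq)
      then show ?thesis using d npos by (simp add: divide_le_eq algebra_simps)
    qed
    finally show "measure M {\<omega>\<in>space M. \<delta> < \<bar>(1 / real n) * (\<Sum>i<n. V i \<omega>) - (\<integral>\<omega>. V 0 \<omega> \<partial>M)\<bar>} \<le> \<eta>" .
  qed
qed

lemma quantile_facts:
  fixes \<mu> :: "real measure"
  assumes P: "prob_space \<mu>" and sb: "sets \<mu> = sets borel" and tau: "0 < \<tau>" "\<tau> < 1"
  shows "\<And>c. quantile \<mu> \<tau> \<le> c \<longleftrightarrow> \<tau> \<le> measure \<mu> {..c}"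
    and "ennreal (min \<tau> (1 - \<tau>) * (quantile \<mu> \<tau>)\<^sup>2) \<le> (\<integral>\<^sup>+y. ennreal (y\<^sup>2) \<partial>\<mu>)"
proof -
  interpret prob_space \<mu> by fact
  have sp: "space \<mu> = UNIV" using sets_eq_imp_space_eq[OF sb] by simp
  have ev[simp]: "A \<in> sets borel \<Longrightarrow> A \<in> sets \<mu>" for A using sb by simp
  define F where "F y = measure \<mu> {..y}" for y
  define S where "S = {y. \<tau> \<le> F y}"
  have q: "quantile \<mu> \<tau> = Inf S" unfolding quantile_def S_def F_def ..
  have Fmono: "a \<le> b \<Longrightarrow> F a \<le> F b" for a b
    unfolding F_def by (intro finite_measure_mono) auto
  have "(\<lambda>n. F (real n)) \<longlonglongrightarrow> measure \<mu> (\<Union>n. {..real n})"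
    unfolding F_def by (intro finite_Lim_measure_incseq) (auto simp: incseq_def)
  moreover have "(\<Union>n. {..real n}) = space \<mu>" using sp by (auto intro: real_arch_simple)
  ultimately have "(\<lambda>n. F (real n)) \<longlonglongrightarrow> 1" by (simp add: prob_space)
  then have "eventually (\<lambda>n. \<tau> < F (real n)) sequentially" using tau by (auto dest: order_tendstoD)
  then obtain n1 where "\<tau> < F (real n1)" by (auto dest: eventually_happens)
  then have Sne: "S \<noteq> {}" unfolding S_def by (auto intro!: exI[of _ "real n1"])
  have "(\<lambda>n. F (- real n)) \<longlonglongrightarrow> measure \<mu> (\<Inter>n. {..- real n})"
    unfolding F_def by (intro finite_Lim_measure_decseq) (auto simp: decseq_def)
  moreover have "(\<Inter>n. {..- real n}) = {}"
  proof -
    have "x \<notin> (\<Inter>n. {..- real n})" for x :: real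
    proof -
      obtain n :: nat where "- x < real n" using reals_Archimedean2 by blast
      then show ?thesis by (auto intro!: exI[of _ n])
    qed
    then show ?thesis by blast
  qed
  ultimately have "(\<lambda>n. F (- real n)) \<longlonglongrightarrow> 0" by simp
  then have "eventually (\<lambda>n. F (- real n) < \<tau>) sequentially" using tau by (auto dest: order_tendstoD)
  then obtain n0 where n0: "F (- real n0) < \<tau>" by (auto dest: eventually_happens)
  have bdd: "bdd_below S"
  proof (rule bdd_belowI)
    fix s assume "s \<in> S"
    then have "\<tau> \<le> F s" by (simp add: S_def)
    then show "- real n0 \<le> s" using n0 Fmono[of s "- real n0"] by linarith
  qed
  have rc: "\<tau> \<le> F c" if "Inf S \<le> c" for c
  proof (rule ccontr)
    assume "\<not> \<tau> \<le> F c"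
    then have lt: "F c < \<tau>" by simp
    have "(\<lambda>n. F (c + 1 / Suc n)) \<longlonglongrightarrow> measure \<mu> (\<Inter>n. {..c + 1 / Suc n})"
      unfolding F_def
    proof (intro finite_Lim_measure_decseq)
      show "decseq (\<lambda>n. {..c + 1 / real (Suc n)})"
        by (auto simp: decseq_def intro!: frac_le) 
    qed auto
    moreover have "(\<Inter>n. {..c + 1 / real (Suc n)}) = {..c}"
    proof safe
      fix x assume x: "x \<in> (\<Inter>n. {..c + 1 / real (Suc n)})"
      show "x \<le> c"
      proof (rule ccontr)
        assume "\<not> x \<le> c"
        then have "0 < x - c" by simp
        then obtain n where "1 / real (Suc n) < x - c"
          using nat_approx_posE by blast
        moreover have "x \<le> c + 1 / real (Suc n)" using x by blast
        ultimately show False by simp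
      qed
    next
      fix x n assume "x \<le> c" then show "x \<le> c + 1 / real (Suc n)" by (simp add: add_increasing2)
    qed
    ultimately have "(\<lambda>n. F (c + 1 / Suc n)) \<longlonglongrightarrow> F c" by (simp add: F_def)
    then have "eventually (\<lambda>n. F (c + 1 / Suc n) < \<tau>) sequentially" using lt by (auto dest: order_tendstoD)
    then obtain n where n: "F (c + 1 / Suc n) < \<tau>" by (auto dest: eventually_happens)
    have "Inf S < c + 1 / Suc n" using that by (simp add: add_pos_pos order_le_less_trans)
    then obtain s where s: "s \<in> S" "s < c + 1 / Suc n" using cInf_less_iff[OF Sne bdd] by auto
    then have "\<tau> \<le> F (c + 1 / Suc n)" using Fmono[of s "c + 1 / Suc n"] by (simp add: S_def)
    with n show False by simp
  qed
  show char: "quantile \<mu> \<tau> \<le> c \<longleftrightarrow> \<tau> \<le> measure \<mu> {..c}" for c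
  proof
    assume "quantile \<mu> \<tau> \<le> c" then show "\<tau> \<le> measure \<mu> {..c}" using rc q by (simp add: F_def)
  next
    assume "\<tau> \<le> measure \<mu> {..c}" then have "c \<in> S" by (simp add: S_def F_def)
    then show "quantile \<mu> \<tau> \<le> c" unfolding q by (rule cInf_lower[OF _ bdd])
  qed
  define qq where "qq = quantile \<mu> \<tau>"
  define m where "m = (\<integral>\<^sup>+y. ennreal (y\<^sup>2) \<partial>\<mu>)"
  have lowb: "ennreal (qq\<^sup>2) * emeasure \<mu> A \<le> m" if A: "A \<in> sets borel" and Ay: "\<And>y. y \<in> A \<Longrightarrow> qq\<^sup>2 \<le> y\<^sup>2" for A
  proof -
    have "ennreal (qq\<^sup>2) * emeasure \<mu> A = (\<integral>\<^sup>+y. ennreal (qq\<^sup>2) * indicator A y \<partial>\<mu>)"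
      using A by (simp add: nn_integral_cmult_indicator)
    also have "\<dots> \<le> m" unfolding m_def
      by (intro nn_integral_mono) (auto split: split_indicator intro: Ay)
    finally show ?thesis .
  qed
  have mt: "min \<tau> (1 - \<tau>) > 0" using tau by simp
  show "ennreal (min \<tau> (1 - \<tau>) * (quantile \<mu> \<tau>)\<^sup>2) \<le> (\<integral>\<^sup>+y. ennreal (y\<^sup>2) \<partial>\<mu>)"
  proof (cases "qq < 0")
    case True
    have "\<tau> \<le> F qq" using char[of qq] by (simp add: qq_def F_def)
    have "ennreal (qq\<^sup>2) * emeasure \<mu> {..qq} \<le> m"
      by (rule lowb) (use True in \<open>auto simp flip: abs_le_square_iff\<close>)
    moreover have "ennreal (min \<tau> (1 - \<tau>) * qq\<^sup>2) \<le> ennreal (qq\<^sup>2) * emeasure \<mu> {..qq}"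
    proof -
      have "min \<tau> (1 - \<tau>) * qq\<^sup>2 \<le> qq\<^sup>2 * F qq"
        using \<open>\<tau> \<le> F qq\<close> mult_right_mono[of "min \<tau> (1 - \<tau>)" "F qq" "qq\<^sup>2"] by (simp add: mult.commute min.coboundedI1)
      then show ?thesis
        by (simp add: F_def emeasure_eq_measure ennreal_mult[symmetric])
    qed
    ultimately have "ennreal (min \<tau> (1 - \<tau>) * qq\<^sup>2) \<le> m" by (rule order_trans[rotated])
    then show ?thesis by (simp add: qq_def m_def)
  next
    case False
    then have q0: "0 \<le> qq" by simp
    have "(\<lambda>n. measure \<mu> {qq - 1 / Suc n<..}) \<longlonglongrightarrow> measure \<mu> (\<Inter>n. {qq - 1 / Suc n<..})"
    proof (intro finite_Lim_measure_decseq)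
      show "decseq (\<lambda>n. {qq - 1 / real (Suc n)<..})"
        by (auto simp: decseq_def intro!: frac_le)
    qed auto
    moreover have "(\<Inter>n. {qq - 1 / real (Suc n)<..}) = {qq..}"
    proof safe
      fix x assume x: "x \<in> (\<Inter>n. {qq - 1 / real (Suc n)<..})"
      show "qq \<le> x"
      proof (rule ccontr)
        assume "\<not> qq \<le> x"
        then have "0 < qq - x" by simp
        then obtain n where "1 / real (Suc n) < qq - x"
          using nat_approx_posE by blast
        moreover have "qq - 1 / real (Suc n) < x" using x by blast
        ultimately show False by simp
      qed
    next
      fix x n assume "qq \<le> x" then show "qq - 1 / real (Suc n) < x"
        by (smt (verit) of_nat_0_less_iff zero_less_Suc divide_pos_pos)
    qed
    ultimately have lim: "(\<lambda>n. measure \<mu> {qq - 1 / Suc n<..}) \<longlonglongrightarrow> measure \<mu> {qq..}" by simp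
    have "1 - \<tau> \<le> measure \<mu> {qq - 1 / Suc n<..}" for n
    proof -
      have "\<not> qq \<le> qq - 1 / Suc n" by simp
      then have "F (qq - 1 / Suc n) < \<tau>" using char[of "qq - 1 / Suc n"] by (simp add: qq_def F_def)
      moreover have "measure \<mu> {qq - 1 / Suc n<..} = 1 - F (qq - 1 / Suc n)"
      proof -
        have "{qq - 1 / Suc n<..} = space \<mu> - {..qq - 1 / Suc n}" using sp by auto
        then show ?thesis by (simp add: prob_compl F_def)
      qed
      ultimately show ?thesis by simp
    qed
    then have ge: "1 - \<tau> \<le> measure \<mu> {qq..}"
      by (intro LIMSEQ_le_const[OF lim]) auto
    have "ennreal (qq\<^sup>2) * emeasure \<mu> {qq..} \<le> m"
      by (rule lowb) (use q0 in \<open>auto intro!: power_mono\<close>)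
    moreover have "ennreal (min \<tau> (1 - \<tau>) * qq\<^sup>2) \<le> ennreal (qq\<^sup>2) * emeasure \<mu> {qq..}"
    proof -
      have "min \<tau> (1 - \<tau>) * qq\<^sup>2 \<le> qq\<^sup>2 * measure \<mu> {qq..}"
        using ge mult_right_mono[of "min \<tau> (1 - \<tau>)" "measure \<mu> {qq..}" "qq\<^sup>2"] by (simp add: mult.commute min.coboundedI2)
      then show ?thesis
        by (simp add: emeasure_eq_measure ennreal_mult[symmetric])
    qed
    ultimately have "ennreal (min \<tau> (1 - \<tau>) * qq\<^sup>2) \<le> m" by (rule order_trans[rotated])
    then show ?thesis by (simp add: qq_def m_def)
  qed
qed

locale qsetup =
  fixes M :: "'a measure" and MX :: "'x measure" and X0 :: "'a \<Rightarrow> 'x" and Y0 Z0 :: "'a \<Rightarrow> real"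
    and e :: "'x \<Rightarrow> real" and \<kappa> :: "'x \<Rightarrow> real measure" and \<tau> \<epsilon> :: real
  assumes M: "prob_space M"
    and X0m[measurable]: "X0 \<in> M \<rightarrow>\<^sub>M MX"
    and Y0m[measurable]: "Y0 \<in> borel_measurable M"
    and Z0m[measurable]: "Z0 \<in> borel_measurable M"
    and Zb: "\<And>\<omega>. \<omega> \<in> space M \<Longrightarrow> Z0 \<omega> \<in> {0, 1}"
    and e_prop: "is_propensity M MX X0 Z0 e"
    and tau: "0 < \<tau>" "\<tau> < 1"
    and kappa: "is_cond_dist_kernel M MX X0 Y0 Z0 \<kappa>"
    and eps: "\<epsilon> > 0" "AE \<omega> in M. \<epsilon> \<le> e (X0 \<omega>) \<and> e (X0 \<omega>) \<le> 1 - \<epsilon>"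
    and Y_var: "integrable M (\<lambda>\<omega>. (Y0 \<omega>)\<^sup>2)"
begin

interpretation prob_space M by (rule M)

lemma em[measurable]: "e \<in> borel_measurable MX" using e_prop by (simp add: is_propensity_def)

lemma km: "\<kappa> \<in> MX \<rightarrow>\<^sub>M prob_algebra borel" using kappa by (simp add: is_cond_dist_kernel_def)

lemma kx: "x \<in> space MX \<Longrightarrow> prob_space (\<kappa> x) \<and> sets (\<kappa> x) = sets borel"
  using measurable_space[OF km] by (auto simp: space_prob_algebra)

lemma Qm[measurable]: "cond_quantile \<kappa> \<tau> \<in> borel_measurable MX"
proof (subst borel_measurable_iff_le, intro allI)
  fix c
  have Fm: "(\<lambda>x. measure (\<kappa> x) {..c}) \<in> borel_measurable MX"
    using measurable_compose[OF km measurable_measure_prob_algebra[of "{..c}" borel]] by simp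
  have "{x \<in> space MX. cond_quantile \<kappa> \<tau> x \<le> c} = {x \<in> space MX. \<tau> \<le> measure (\<kappa> x) {..c}}"
    using quantile_facts(1)[OF _ _ tau] kx by (auto simp: cond_quantile_def)
  also have "\<dots> \<in> sets MX" using Fm by measurable
  finally show "{x \<in> space MX. cond_quantile \<kappa> \<tau> x \<le> c} \<in> sets MX" .
qed

lemma e_ae: "AE \<omega> in M. 0 \<le> e (X0 \<omega>) \<and> e (X0 \<omega>) \<le> 1" "AE \<omega> in M. \<epsilon> \<le> e (X0 \<omega>)"
  using eps(2) by (eventually_elim, use eps(1) in auto)+

lemma prop_nn:
  fixes g :: "'x \<Rightarrow> ennreal"
  assumes g[measurable]: "g \<in> borel_measurable MX"
  shows "(\<integral>\<^sup>+\<omega>. indicator {1} (Z0 \<omega>) * g (X0 \<omega>) \<partial>M) = (\<integral>\<^sup>+\<omega>. ennreal (e (X0 \<omega>)) * g (X0 \<omega>) \<partial>M)"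
proof -
  define \<nu>1 where "\<nu>1 = distr (density M (\<lambda>\<omega>. indicator {1} (Z0 \<omega>))) MX X0"
  define \<nu>2 where "\<nu>2 = distr (density M (\<lambda>\<omega>. ennreal (e (X0 \<omega>)))) MX X0"
  have eq: "\<nu>1 = \<nu>2"
  proof (rule measure_eqI)
    show "sets \<nu>1 = sets \<nu>2" by (simp add: \<nu>1_def \<nu>2_def)
    fix A assume "A \<in> sets \<nu>1"
    then have A[measurable]: "A \<in> sets MX" by (simp add: \<nu>1_def)
    have "emeasure \<nu>1 A = (\<integral>\<^sup>+\<omega>. indicator {1} (Z0 \<omega>) * indicator (X0 -` A \<inter> space M) \<omega> \<partial>M)"
      unfolding \<nu>1_def by (simp add: emeasure_distr emeasure_density)
    also have "\<dots> = (\<integral>\<^sup>+\<omega>. indicator {\<omega>\<in>space M. X0 \<omega> \<in> A \<and> Z0 \<omega> = 1} \<omega> \<partial>M)"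
      by (intro nn_integral_cong) (auto split: split_indicator)
    also have "\<dots> = ennreal (measure M {\<omega>\<in>space M. X0 \<omega> \<in> A \<and> Z0 \<omega> = 1})"
      by (simp add: emeasure_eq_measure)
    also have "\<dots> = ennreal (\<integral>\<omega>. indicator (X0 -` A \<inter> space M) \<omega> * e (X0 \<omega>) \<partial>M)"
      using e_prop A by (simp add: is_propensity_def)
    also have "\<dots> = (\<integral>\<^sup>+\<omega>. ennreal (indicator (X0 -` A \<inter> space M) \<omega> * e (X0 \<omega>)) \<partial>M)"
    proof (rule nn_integral_eq_integral[symmetric])
      show "integrable M (\<lambda>\<omega>. indicator (X0 -` A \<inter> space M) \<omega> * e (X0 \<omega>))"
      proof (rule integrable_const_bound[where B=1])
        show "AE \<omega> in M. norm (indicator (X0 -` A \<inter> space M) \<omega> * e (X0 \<omega>)) \<le> 1"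
          using e_ae(1) by eventually_elim (auto split: split_indicator)
      qed measurable
      show "AE x in M. 0 \<le> indicator (X0 -` A \<inter> space M) x * e (X0 x)"
        using e_ae(1) by (auto elim!: eventually_mono split: split_indicator)
    qed
    also have "\<dots> = emeasure \<nu>2 A"
      unfolding \<nu>2_def by (simp add: emeasure_distr emeasure_density)
        (intro nn_integral_cong, auto split: split_indicator)
    finally show "emeasure \<nu>1 A = emeasure \<nu>2 A" .
  qed
  have "(\<integral>\<^sup>+\<omega>. indicator {1} (Z0 \<omega>) * g (X0 \<omega>) \<partial>M) = integral\<^sup>N \<nu>1 g"
    unfolding \<nu>1_def by (simp add: nn_integral_distr nn_integral_density)
  also have "\<dots> = integral\<^sup>N \<nu>2 g" by (simp add: eq)
  also have "\<dots> = (\<integral>\<^sup>+\<omega>. ennreal (e (X0 \<omega>)) * g (X0 \<omega>) \<partial>M)"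
    unfolding \<nu>2_def by (simp add: nn_integral_distr nn_integral_density)
  finally show ?thesis .
qed

lemma kappa_nn:
  fixes h :: "real \<Rightarrow> ennreal"
  assumes h[measurable]: "h \<in> borel_measurable borel"
  shows "(\<integral>\<^sup>+\<omega>. indicator {1} (Z0 \<omega>) * h (Y0 \<omega>) \<partial>M) = (\<integral>\<^sup>+\<omega>. indicator {1} (Z0 \<omega>) * (\<integral>\<^sup>+y. h y \<partial>\<kappa> (X0 \<omega>)) \<partial>M)"
proof -
  define D1 where "D1 = density M (\<lambda>\<omega>. indicator {1} (Z0 \<omega>))"
  have sD1: "sets D1 = sets M" "space D1 = space M" by (simp_all add: D1_def)
  have ne: "space D1 \<noteq> {}" using sD1 not_empty by simp
  have NM: "(\<lambda>\<omega>. \<kappa> (X0 \<omega>)) \<in> M \<rightarrow>\<^sub>M subprob_algebra borel"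
    using measurable_compose[OF X0m measurable_prob_algebraD[OF km]] by simp
  have N: "(\<lambda>\<omega>. \<kappa> (X0 \<omega>)) \<in> D1 \<rightarrow>\<^sub>M subprob_algebra borel"
    using NM by (simp add: measurable_cong_sets[OF sD1(1) refl])
  define \<nu>3 where "\<nu>3 = distr D1 borel Y0"
  define \<nu>4 where "\<nu>4 = D1 \<bind> (\<lambda>\<omega>. \<kappa> (X0 \<omega>))"
  have kX: "\<omega> \<in> space M \<Longrightarrow> prob_space (\<kappa> (X0 \<omega>)) \<and> sets (\<kappa> (X0 \<omega>)) = sets borel" for \<omega>
    using kx measurable_space[OF X0m] by blast
  have eq: "\<nu>3 = \<nu>4"
  proof (rule measure_eqI)
    show "sets \<nu>3 = sets \<nu>4" unfolding \<nu>3_def \<nu>4_def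
      using kX ne sD1 by (subst sets_bind) auto
    fix B assume "B \<in> sets \<nu>3"
    then have B[measurable]: "B \<in> sets borel" by (simp add: \<nu>3_def)
    have "emeasure \<nu>3 B = (\<integral>\<^sup>+\<omega>. indicator {1} (Z0 \<omega>) * indicator (Y0 -` B \<inter> space M) \<omega> \<partial>M)"
      unfolding \<nu>3_def D1_def by (simp add: emeasure_distr emeasure_density)
    also have "\<dots> = (\<integral>\<^sup>+\<omega>. indicator {\<omega>\<in>space M. X0 \<omega> \<in> space MX \<and> Z0 \<omega> = 1 \<and> Y0 \<omega> \<in> B} \<omega> \<partial>M)"
      using measurable_space[OF X0m] by (intro nn_integral_cong) (auto split: split_indicator)
    also have "\<dots> = ennreal (measure M {\<omega>\<in>space M. X0 \<omega> \<in> space MX \<and> Z0 \<omega> = 1 \<and> Y0 \<omega> \<in> B})"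
      by (simp add: emeasure_eq_measure)
    also have "\<dots> = ennreal (\<integral>\<omega>. indicator (X0 -` space MX \<inter> space M) \<omega> * indicator {1} (Z0 \<omega>) * measure (\<kappa> (X0 \<omega>)) B \<partial>M)"
      using kappa B by (simp add: is_cond_dist_kernel_def)
    also have "\<dots> = (\<integral>\<^sup>+\<omega>. ennreal (indicator (X0 -` space MX \<inter> space M) \<omega> * indicator {1} (Z0 \<omega>) * measure (\<kappa> (X0 \<omega>)) B) \<partial>M)"
    proof (rule nn_integral_eq_integral[symmetric])
      have mm: "(\<lambda>\<omega>. measure (\<kappa> (X0 \<omega>)) B) \<in> borel_measurable M"
        using measurable_compose[OF NM measurable_measure_subprob_algebra[OF B]] by simp
      show "integrable M (\<lambda>\<omega>. indicator (X0 -` space MX \<inter> space M) \<omega> * indicator {1} (Z0 \<omega>) * measure (\<kappa> (X0 \<omega>)) B)"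
        by (rule integrable_const_bound[where B=1])
          (use mm kX in \<open>auto split: split_indicator intro!: prob_space.prob_le_1\<close>)
      show "AE \<omega> in M. 0 \<le> indicator (X0 -` space MX \<inter> space M) \<omega> * indicator {1} (Z0 \<omega>) * measure (\<kappa> (X0 \<omega>)) B"
        by (auto split: split_indicator)
    qed
    also have "\<dots> = (\<integral>\<^sup>+\<omega>. indicator {1} (Z0 \<omega>) * emeasure (\<kappa> (X0 \<omega>)) B \<partial>M)"
      using measurable_space[OF X0m] kX
      by (intro nn_integral_cong) (auto split: split_indicator simp: finite_measure.emeasure_eq_measure prob_space_def)
    also have "\<dots> = emeasure \<nu>4 B"
      unfolding \<nu>4_def using ne N B kX
      by (subst emeasure_bind[where N=borel]) (auto simp: D1_def nn_integral_density)
    finally show "emeasure \<nu>3 B = emeasure \<nu>4 B" .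
  qed
  have "(\<integral>\<^sup>+\<omega>. indicator {1} (Z0 \<omega>) * h (Y0 \<omega>) \<partial>M) = integral\<^sup>N \<nu>3 h"
    unfolding \<nu>3_def D1_def by (simp add: nn_integral_distr nn_integral_density)
  also have "\<dots> = integral\<^sup>N \<nu>4 h" by (simp add: eq)
  also have "\<dots> = (\<integral>\<^sup>+\<omega>. (\<integral>\<^sup>+y. h y \<partial>\<kappa> (X0 \<omega>)) \<partial>D1)"
    unfolding \<nu>4_def by (rule nn_integral_bind[OF h N])
  also have "\<dots> = (\<integral>\<^sup>+\<omega>. indicator {1} (Z0 \<omega>) * (\<integral>\<^sup>+y. h y \<partial>\<kappa> (X0 \<omega>)) \<partial>M)"
    unfolding D1_def using NM h by (subst nn_integral_density) auto
  finally show ?thesis .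
qed

end

context qsetup
begin

interpretation prob_space M by (rule M)

lemma Q_L2: "integrable M (\<lambda>\<omega>. (cond_quantile \<kappa> \<tau> (X0 \<omega>))\<^sup>2)"
proof (rule integrableI_nonneg)
  show "(\<lambda>\<omega>. (cond_quantile \<kappa> \<tau> (X0 \<omega>))\<^sup>2) \<in> borel_measurable M" by measurable
  show "AE \<omega> in M. 0 \<le> (cond_quantile \<kappa> \<tau> (X0 \<omega>))\<^sup>2" by simp
  define c where "c = min \<tau> (1 - \<tau>)"
  have c: "0 < c" using tau by (simp add: c_def)
  define m2 where "m2 x = (\<integral>\<^sup>+y. ennreal (y\<^sup>2) \<partial>\<kappa> x)" for x
  have m2m[measurable]: "m2 \<in> borel_measurable MX"
    unfolding m2_def
    using measurable_compose[OF measurable_prob_algebraD[OF km] nn_integral_measurable_subprob_algebra[of "\<lambda>y. ennreal (y\<^sup>2)" borel]]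
    by simp
  have pw: "ennreal (c * (cond_quantile \<kappa> \<tau> (X0 \<omega>))\<^sup>2) \<le> m2 (X0 \<omega>)" if "\<omega> \<in> space M" for \<omega>
  proof -
    have "X0 \<omega> \<in> space MX" using measurable_space[OF X0m that] .
    then show ?thesis using quantile_facts(2)[OF _ _ tau] kx
      by (simp add: c_def m2_def cond_quantile_def)
  qed
  have 1: "ennreal c * (\<integral>\<^sup>+\<omega>. ennreal ((cond_quantile \<kappa> \<tau> (X0 \<omega>))\<^sup>2) \<partial>M) \<le> (\<integral>\<^sup>+\<omega>. m2 (X0 \<omega>) \<partial>M)"
  proof -
    have "ennreal c * (\<integral>\<^sup>+\<omega>. ennreal ((cond_quantile \<kappa> \<tau> (X0 \<omega>))\<^sup>2) \<partial>M)
        = (\<integral>\<^sup>+\<omega>. ennreal (c * (cond_quantile \<kappa> \<tau> (X0 \<omega>))\<^sup>2) \<partial>M)"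
      using c by (subst nn_integral_cmult[symmetric]) (auto simp: ennreal_mult)
    also have "\<dots> \<le> (\<integral>\<^sup>+\<omega>. m2 (X0 \<omega>) \<partial>M)" by (intro nn_integral_mono pw)
    finally show ?thesis .
  qed
  have 2: "ennreal \<epsilon> * (\<integral>\<^sup>+\<omega>. m2 (X0 \<omega>) \<partial>M) \<le> (\<integral>\<^sup>+\<omega>. ennreal (e (X0 \<omega>)) * m2 (X0 \<omega>) \<partial>M)"
  proof -
    have "ennreal \<epsilon> * (\<integral>\<^sup>+\<omega>. m2 (X0 \<omega>) \<partial>M) = (\<integral>\<^sup>+\<omega>. ennreal \<epsilon> * m2 (X0 \<omega>) \<partial>M)"
      by (subst nn_integral_cmult) auto
    also have "\<dots> \<le> (\<integral>\<^sup>+\<omega>. ennreal (e (X0 \<omega>)) * m2 (X0 \<omega>) \<partial>M)"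
      using e_ae(2) by (intro nn_integral_mono_AE) (auto elim!: eventually_mono intro!: mult_right_mono ennreal_leI)
    finally show ?thesis .
  qed
  have 3: "(\<integral>\<^sup>+\<omega>. ennreal (e (X0 \<omega>)) * m2 (X0 \<omega>) \<partial>M) = (\<integral>\<^sup>+\<omega>. indicator {1} (Z0 \<omega>) * ennreal ((Y0 \<omega>)\<^sup>2) \<partial>M)"
    using prop_nn[OF m2m] kappa_nn[of "\<lambda>y. ennreal (y\<^sup>2)"] by (simp add: m2_def)
  have 4: "(\<integral>\<^sup>+\<omega>. indicator {1} (Z0 \<omega>) * ennreal ((Y0 \<omega>)\<^sup>2) \<partial>M) \<le> (\<integral>\<^sup>+\<omega>. ennreal ((Y0 \<omega>)\<^sup>2) \<partial>M)"
    by (intro nn_integral_mono) (auto split: split_indicator)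
  have 5: "(\<integral>\<^sup>+\<omega>. ennreal ((Y0 \<omega>)\<^sup>2) \<partial>M) < \<infinity>"
    using nn_integral_eq_integral[OF Y_var] by simp
  have "ennreal \<epsilon> * (\<integral>\<^sup>+\<omega>. m2 (X0 \<omega>) \<partial>M) < \<infinity>" using 2 3 4 5 by (simp add: order_le_less_trans)
  then have "(\<integral>\<^sup>+\<omega>. m2 (X0 \<omega>) \<partial>M) < \<infinity>" using eps(1) by (auto simp: ennreal_mult_less_top)
  then have "ennreal c * (\<integral>\<^sup>+\<omega>. ennreal ((cond_quantile \<kappa> \<tau> (X0 \<omega>))\<^sup>2) \<partial>M) < \<infinity>"
    using 1 by (simp add: order_le_less_trans)
  then show "(\<integral>\<^sup>+\<omega>. ennreal ((cond_quantile \<kappa> \<tau> (X0 \<omega>))\<^sup>2) \<partial>M) < \<infinity>"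
    using c by (auto simp: ennreal_mult_less_top)
qed

lemma Q_L1: "integrable M (\<lambda>\<omega>. cond_quantile \<kappa> \<tau> (X0 \<omega>))"
  using square_integrable_imp_integrable[OF _ Q_L2] by simp

lemma V_L2: "integrable M (\<lambda>\<omega>. (cond_quantile \<kappa> \<tau> (X0 \<omega>) * Z0 \<omega> / e (X0 \<omega>))\<^sup>2)"
proof (rule Bochner_Integration.integrable_bound[where f="\<lambda>\<omega>. (1 / \<epsilon>\<^sup>2) * (cond_quantile \<kappa> \<tau> (X0 \<omega>))\<^sup>2"])
  show "integrable M (\<lambda>\<omega>. (1 / \<epsilon>\<^sup>2) * (cond_quantile \<kappa> \<tau> (X0 \<omega>))\<^sup>2)"
    using Q_L2 by simp
  show "(\<lambda>\<omega>. (cond_quantile \<kappa> \<tau> (X0 \<omega>) * Z0 \<omega> / e (X0 \<omega>))\<^sup>2) \<in> borel_measurable M" by measurable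
  have "AE \<omega> in M. \<omega> \<in> space M \<and> \<epsilon> \<le> e (X0 \<omega>)" using e_ae(2) by simp
  then show "AE \<omega> in M. norm ((cond_quantile \<kappa> \<tau> (X0 \<omega>) * Z0 \<omega> / e (X0 \<omega>))\<^sup>2)
      \<le> norm ((1 / \<epsilon>\<^sup>2) * (cond_quantile \<kappa> \<tau> (X0 \<omega>))\<^sup>2)"
  proof eventually_elim
    fix \<omega> assume w: "\<omega> \<in> space M \<and> \<epsilon> \<le> e (X0 \<omega>)"
    define q where "q = cond_quantile \<kappa> \<tau> (X0 \<omega>)"
    define z where "z = Z0 \<omega>"
    define a where "a = e (X0 \<omega>)"
    have z: "z\<^sup>2 \<le> 1" using Zb[of \<omega>] w by (auto simp: z_def)
    have a: "\<epsilon> \<le> a" "0 < a" using w eps(1) by (auto simp: a_def)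
    have "(q * z / a)\<^sup>2 = q\<^sup>2 * z\<^sup>2 / a\<^sup>2" by (simp add: power_divide power_mult_distrib)
    also have "\<dots> \<le> q\<^sup>2 * 1 / a\<^sup>2"
      using z a by (intro divide_right_mono mult_left_mono) auto
    also have "\<dots> \<le> q\<^sup>2 / \<epsilon>\<^sup>2"
      using a eps(1) by (simp add: divide_left_mono power_mono mult_pos_pos)
    finally show "norm ((cond_quantile \<kappa> \<tau> (X0 \<omega>) * Z0 \<omega> / e (X0 \<omega>))\<^sup>2)
      \<le> norm ((1 / \<epsilon>\<^sup>2) * (cond_quantile \<kappa> \<tau> (X0 \<omega>))\<^sup>2)"
      by (simp add: q_def z_def a_def)
  qed
qed

lemma V_mean: "(\<integral>\<omega>. cond_quantile \<kappa> \<tau> (X0 \<omega>) * Z0 \<omega> / e (X0 \<omega>) \<partial>M) = (\<integral>\<omega>. cond_quantile \<kappa> \<tau> (X0 \<omega>) \<partial>M)"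
proof -
  define Q where "Q = cond_quantile \<kappa> \<tau>"
  have Qm': "Q \<in> borel_measurable MX" unfolding Q_def by (rule Qm)
  have VI: "integrable M (\<lambda>\<omega>. Q (X0 \<omega>) * Z0 \<omega> / e (X0 \<omega>))"
    using square_integrable_imp_integrable[OF _ V_L2] by (simp add: Q_def)
  have QI: "integrable M (\<lambda>\<omega>. Q (X0 \<omega>))" using Q_L1 by (simp add: Q_def)
  have key: "(\<integral>\<^sup>+\<omega>. ennreal (s * (Q (X0 \<omega>) * Z0 \<omega> / e (X0 \<omega>))) \<partial>M) = (\<integral>\<^sup>+\<omega>. ennreal (s * Q (X0 \<omega>)) \<partial>M)" for s :: real
  proof -
    have gm: "(\<lambda>x. ennreal (s * Q x / e x)) \<in> borel_measurable MX" using Qm' by measurable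
    have "(\<integral>\<^sup>+\<omega>. ennreal (s * (Q (X0 \<omega>) * Z0 \<omega> / e (X0 \<omega>))) \<partial>M)
        = (\<integral>\<^sup>+\<omega>. indicator {1} (Z0 \<omega>) * ennreal (s * Q (X0 \<omega>) / e (X0 \<omega>)) \<partial>M)"
    proof (intro nn_integral_cong)
      fix \<omega> assume "\<omega> \<in> space M"
      then have "Z0 \<omega> = 0 \<or> Z0 \<omega> = 1" using Zb by auto
      then show "ennreal (s * (Q (X0 \<omega>) * Z0 \<omega> / e (X0 \<omega>))) = indicator {1} (Z0 \<omega>) * ennreal (s * Q (X0 \<omega>) / e (X0 \<omega>))"
        by auto
    qed
    also have "\<dots> = (\<integral>\<^sup>+\<omega>. ennreal (e (X0 \<omega>)) * ennreal (s * Q (X0 \<omega>) / e (X0 \<omega>)) \<partial>M)"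
      by (rule prop_nn[OF gm])
    also have "\<dots> = (\<integral>\<^sup>+\<omega>. ennreal (s * Q (X0 \<omega>)) \<partial>M)"
    proof (intro nn_integral_cong_AE)
      show "AE \<omega> in M. ennreal (e (X0 \<omega>)) * ennreal (s * Q (X0 \<omega>) / e (X0 \<omega>)) = ennreal (s * Q (X0 \<omega>))"
        using e_ae(2)
      proof eventually_elim
        fix \<omega> assume "\<epsilon> \<le> e (X0 \<omega>)"
        then have "0 < e (X0 \<omega>)" using eps(1) by simp
        then show "ennreal (e (X0 \<omega>)) * ennreal (s * Q (X0 \<omega>) / e (X0 \<omega>)) = ennreal (s * Q (X0 \<omega>))"
          by (simp add: ennreal_mult'[symmetric])
      qed
    qed
    finally show ?thesis .
  qed
  have "(\<integral>\<omega>. Q (X0 \<omega>) * Z0 \<omega> / e (X0 \<omega>) \<partial>M) = (\<integral>\<omega>. Q (X0 \<omega>) \<partial>M)"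
    using key[of 1] key[of "-1"]
    by (simp add: real_lebesgue_integral_def[OF VI] real_lebesgue_integral_def[OF QI])
  then show ?thesis by (simp add: Q_def)
qed

end

lemma cip_sum0:
  fixes Y :: "'k \<Rightarrow> nat \<Rightarrow> 'a \<Rightarrow> real"
  assumes FM: "finite_measure M" and fin: "finite I" and each: "\<And>k. k \<in> I \<Longrightarrow> conv_in_prob M (Y k) 0"
    and meas: "\<And>k n. k \<in> I \<Longrightarrow> Y k n \<in> borel_measurable M"
  shows "conv_in_prob M (\<lambda>n \<omega>. \<Sum>k\<in>I. Y k n \<omega>) 0"
proof (rule cip_I)
  fix \<delta> \<eta> :: real assume d: "\<delta> > 0" and e: "\<eta> > 0"
  show "eventually (\<lambda>n. measure M {\<omega>\<in>space M. \<delta> < \<bar>(\<Sum>k\<in>I. Y k n \<omega>) - 0\<bar>} \<le> \<eta>) sequentially"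
  proof (cases "I = {}")
    case True then show ?thesis using d e by simp
  next
    case False
    define c where "c = real (card I)"
    have c: "0 < c" using False fin by (simp add: c_def card_gt_0_iff)
    have "\<forall>k\<in>I. eventually (\<lambda>n. measure M {\<omega>\<in>space M. \<delta> / c < \<bar>Y k n \<omega> - 0\<bar>} < \<eta> / c) sequentially"
    proof
      fix k assume "k \<in> I"
      show "eventually (\<lambda>n. measure M {\<omega>\<in>space M. \<delta> / c < \<bar>Y k n \<omega> - 0\<bar>} < \<eta> / c) sequentially"
        by (rule cip_D[OF each[OF \<open>k \<in> I\<close>]]) (use d e c in auto)
    qed
    then have "eventually (\<lambda>n. \<forall>k\<in>I. measure M {\<omega>\<in>space M. \<delta> / c < \<bar>Y k n \<omega> - 0\<bar>} < \<eta> / c) sequentially"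
      by (rule eventually_ball_finite[OF fin])
    then show ?thesis
    proof eventually_elim
      fix n assume n: "\<forall>k\<in>I. measure M {\<omega>\<in>space M. \<delta> / c < \<bar>Y k n \<omega> - 0\<bar>} < \<eta> / c"
      have sub: "{\<omega>\<in>space M. \<delta> < \<bar>(\<Sum>k\<in>I. Y k n \<omega>) - 0\<bar>} \<subseteq> (\<Union>k\<in>I. {\<omega>\<in>space M. \<delta> / c < \<bar>Y k n \<omega> - 0\<bar>})"
      proof safe
        fix \<omega> assume w: "\<omega> \<in> space M" "\<delta> < \<bar>(\<Sum>k\<in>I. Y k n \<omega>) - 0\<bar>"
        show "\<omega> \<in> (\<Union>k\<in>I. {\<omega>\<in>space M. \<delta> / c < \<bar>Y k n \<omega> - 0\<bar>})"
        proof (rule ccontr)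
          assume "\<omega> \<notin> (\<Union>k\<in>I. {\<omega>\<in>space M. \<delta> / c < \<bar>Y k n \<omega> - 0\<bar>})"
          then have le: "\<And>k. k \<in> I \<Longrightarrow> \<bar>Y k n \<omega>\<bar> \<le> \<delta> / c" using w by auto
          have "\<bar>\<Sum>k\<in>I. Y k n \<omega>\<bar> \<le> (\<Sum>k\<in>I. \<bar>Y k n \<omega>\<bar>)" by (rule sum_abs)
          also have "\<dots> \<le> (\<Sum>k\<in>I. \<delta> / c)" by (intro sum_mono le)
          also have "\<dots> = \<delta>" using c by (simp add: c_def)
          finally show False using w by simp
        qed
      qed
      have Sm: "{\<omega>\<in>space M. \<delta> / c < \<bar>Y k n \<omega> - 0\<bar>} \<in> sets M" if "k \<in> I" for k
        using meas[OF that] by measurable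
      have Um: "(\<Union>k\<in>I. {\<omega>\<in>space M. \<delta> / c < \<bar>Y k n \<omega> - 0\<bar>}) \<in> sets M"
        using Sm fin by (intro sets.finite_UN) auto
      have "measure M {\<omega>\<in>space M. \<delta> < \<bar>(\<Sum>k\<in>I. Y k n \<omega>) - 0\<bar>} \<le> measure M (\<Union>k\<in>I. {\<omega>\<in>space M. \<delta> / c < \<bar>Y k n \<omega> - 0\<bar>})"
        by (rule finite_measure.finite_measure_mono[OF FM sub Um])
      also have "\<dots> \<le> (\<Sum>k\<in>I. measure M {\<omega>\<in>space M. \<delta> / c < \<bar>Y k n \<omega> - 0\<bar>})"
        by (rule measure_UNION_le[OF fin Sm])
      also have "\<dots> \<le> (\<Sum>k\<in>I. \<eta> / c)" using n by (intro sum_mono) auto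
      also have "\<dots> = \<eta>" using c by (simp add: c_def)
      finally show "measure M {\<omega>\<in>space M. \<delta> < \<bar>(\<Sum>k\<in>I. Y k n \<omega>) - 0\<bar>} \<le> \<eta>" .
    qed
  qed
qed

lemma cip_sqrt:
  assumes "conv_in_prob M T 0" and nn: "\<And>n \<omega>. 0 \<le> T n \<omega>"
  shows "conv_in_prob M (\<lambda>n \<omega>. sqrt (T n \<omega>)) 0"
proof (rule cip_I)
  fix \<delta> \<eta> :: real assume d: "\<delta> > 0" and e: "\<eta> > 0"
  have "eventually (\<lambda>n. measure M {\<omega>\<in>space M. \<delta>\<^sup>2 < \<bar>T n \<omega> - 0\<bar>} < \<eta>) sequentially"
    using cip_D[OF assms(1), of "\<delta>\<^sup>2" \<eta>] d e by simp
  then show "eventually (\<lambda>n. measure M {\<omega>\<in>space M. \<delta> < \<bar>sqrt (T n \<omega>) - 0\<bar>} \<le> \<eta>) sequentially"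
  proof eventually_elim
    fix n assume n: "measure M {\<omega>\<in>space M. \<delta>\<^sup>2 < \<bar>T n \<omega> - 0\<bar>} < \<eta>"
    have "{\<omega>\<in>space M. \<delta> < \<bar>sqrt (T n \<omega>) - 0\<bar>} = {\<omega>\<in>space M. \<delta>\<^sup>2 < \<bar>T n \<omega> - 0\<bar>}"
    proof (intro Collect_cong conj_cong refl)
      fix \<omega>
      have t: "0 \<le> T n \<omega>" by (rule nn)
      show "(\<delta> < \<bar>sqrt (T n \<omega>) - 0\<bar>) = (\<delta>\<^sup>2 < \<bar>T n \<omega> - 0\<bar>)"
      proof
        assume "\<delta> < \<bar>sqrt (T n \<omega>) - 0\<bar>"
        then have "\<delta> < sqrt (T n \<omega>)" using t by simp
        then have "\<delta>\<^sup>2 < (sqrt (T n \<omega>))\<^sup>2" using d by (intro power_strict_mono) auto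
        then show "\<delta>\<^sup>2 < \<bar>T n \<omega> - 0\<bar>" using t by simp
      next
        assume "\<delta>\<^sup>2 < \<bar>T n \<omega> - 0\<bar>"
        then have "\<delta>\<^sup>2 < T n \<omega>" using t by simp
        then have "\<delta> < sqrt (T n \<omega>)" by (rule real_less_rsqrt)
        then show "\<delta> < \<bar>sqrt (T n \<omega>) - 0\<bar>" using t by simp
      qed
    qed
    then show "measure M {\<omega>\<in>space M. \<delta> < \<bar>sqrt (T n \<omega>) - 0\<bar>} \<le> \<eta>" using n by simp
  qed
qed

lemma abs_le_t_sq: fixes d t :: real assumes "t > 0" shows "\<bar>d\<bar> \<le> t + d\<^sup>2 / t"
proof (cases "\<bar>d\<bar> \<le> t")
  case True then show ?thesis using assms by (simp add: add_increasing2)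
next
  case False
  then have "t < \<bar>d\<bar>" by simp
  then have "t * \<bar>d\<bar> \<le> d\<^sup>2" using assms
    by (metis abs_ge_zero abs_mult_self_eq less_eq_real_def mult_right_mono power2_eq_square)
  then have "\<bar>d\<bar> \<le> d\<^sup>2 / t" using assms by (simp add: le_divide_eq mult.commute)
  then show ?thesis using assms by simp
qed

lemma term_bound:
  fixes qh q z eh ee \<epsilon> t \<eta> :: real
  assumes e: "\<epsilon> > 0" and t: "t > 0" and h: "0 \<le> \<eta>" "\<eta> \<le> \<epsilon> / 2"
    and ee: "\<epsilon> \<le> ee" and eh: "\<bar>eh - ee\<bar> \<le> \<eta>" and z: "\<bar>z\<bar> \<le> 1"
  shows "\<bar>qh * z / eh - q * z / ee\<bar> \<le> (2 / \<epsilon>) * (t + (qh - q)\<^sup>2 / t) + (2 * \<eta> / \<epsilon>\<^sup>2) * \<bar>q\<bar>"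
proof -
  have eh2: "\<epsilon> / 2 \<le> eh" using ee eh h by linarith
  have ehp: "0 < eh" using eh2 e by linarith
  have eep: "0 < ee" using ee e by linarith
  have split: "qh * z / eh - q * z / ee = (qh - q) * z / eh + q * z * (ee - eh) / (eh * ee)"
    using ehp eep by (simp add: field_simps)
  have b1: "\<bar>(qh - q) * z / eh\<bar> \<le> (2 / \<epsilon>) * (t + (qh - q)\<^sup>2 / t)"
  proof -
    have "\<bar>(qh - q) * z / eh\<bar> = \<bar>qh - q\<bar> * \<bar>z\<bar> / eh" using ehp by (simp add: abs_mult)
    also have "\<dots> \<le> \<bar>qh - q\<bar> / eh" using z ehp by (simp add: divide_right_mono mult_left_le)
    also have "\<dots> \<le> \<bar>qh - q\<bar> / (\<epsilon> / 2)" using eh2 e by (intro divide_left_mono) auto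
    also have "\<dots> = (2 / \<epsilon>) * \<bar>qh - q\<bar>" by simp
    also have "\<dots> \<le> (2 / \<epsilon>) * (t + (qh - q)\<^sup>2 / t)"
      using abs_le_t_sq[OF t] e by (intro mult_left_mono) auto
    finally show ?thesis .
  qed
  have b2: "\<bar>q * z * (ee - eh) / (eh * ee)\<bar> \<le> (2 * \<eta> / \<epsilon>\<^sup>2) * \<bar>q\<bar>"
  proof -
    have "\<bar>q * z * (ee - eh) / (eh * ee)\<bar> = \<bar>q\<bar> * \<bar>z\<bar> * \<bar>ee - eh\<bar> / (eh * ee)"
      using ehp eep by (simp add: abs_mult)
    also have "\<dots> \<le> \<bar>q\<bar> * 1 * \<eta> / (eh * ee)"
      using z eh ehp eep by (intro divide_right_mono mult_mono) (auto simp: abs_minus_commute)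
    also have "\<dots> \<le> \<bar>q\<bar> * \<eta> / ((\<epsilon> / 2) * \<epsilon>)"
    proof -
      have "(\<epsilon> / 2) * \<epsilon> \<le> eh * ee" using eh2 ee e by (intro mult_mono) auto
      moreover have "0 < (\<epsilon> / 2) * \<epsilon>" using e by simp
      ultimately have "\<bar>q\<bar> * \<eta> / (eh * ee) \<le> \<bar>q\<bar> * \<eta> / ((\<epsilon> / 2) * \<epsilon>)"
        using h by (intro divide_left_mono) auto
      then show ?thesis by simp
    qed
    also have "\<dots> = (2 * \<eta> / \<epsilon>\<^sup>2) * \<bar>q\<bar>" using e by (simp add: power2_eq_square field_simps)
    finally show ?thesis .
  qed
  have "\<bar>(qh - q) * z / eh + q * z * (ee - eh) / (eh * ee)\<bar> \<le> \<bar>(qh - q) * z / eh\<bar> + \<bar>q * z * (ee - eh) / (eh * ee)\<bar>"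
    by (rule abs_triangle_ineq)
  then show ?thesis unfolding split using add_mono[OF b1 b2] by (rule order_trans)
qed

lemma sum_bound:
  fixes qh q z eh ee :: "nat \<Rightarrow> real" and \<epsilon> t \<eta> :: real and n :: nat
  assumes e: "\<epsilon> > 0" and t: "t > 0" and h: "0 \<le> \<eta>" "\<eta> \<le> \<epsilon> / 2"
    and ee: "\<And>i. i < n \<Longrightarrow> \<epsilon> \<le> ee i" and eh: "\<And>i. i < n \<Longrightarrow> \<bar>eh i - ee i\<bar> \<le> \<eta>"
    and z: "\<And>i. i < n \<Longrightarrow> \<bar>z i\<bar> \<le> 1"
  shows "\<bar>(1 / real n) * (\<Sum>i<n. qh i * z i / eh i) - (1 / real n) * (\<Sum>i<n. q i * z i / ee i)\<bar>
     \<le> (2 / \<epsilon>) * (t + ((1 / real n) * (\<Sum>i<n. (qh i - q i)\<^sup>2)) / t) + (2 * \<eta> / \<epsilon>\<^sup>2) * ((1 / real n) * (\<Sum>i<n. \<bar>q i\<bar>))"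
proof (cases "n = 0")
  case True then show ?thesis using e t by simp
next
  case False
  then have np: "0 < real n" by simp
  have "\<bar>(1 / real n) * (\<Sum>i<n. qh i * z i / eh i) - (1 / real n) * (\<Sum>i<n. q i * z i / ee i)\<bar>
      = (1 / real n) * \<bar>\<Sum>i<n. (qh i * z i / eh i - q i * z i / ee i)\<bar>"
    using np by (simp add: sum_subtractf abs_mult diff_divide_distrib[symmetric])
  also have "\<dots> \<le> (1 / real n) * (\<Sum>i<n. \<bar>qh i * z i / eh i - q i * z i / ee i\<bar>)"
    using np by (intro mult_left_mono sum_abs) auto
  also have "\<dots> \<le> (1 / real n) * (\<Sum>i<n. (2 / \<epsilon>) * (t + (qh i - q i)\<^sup>2 / t) + (2 * \<eta> / \<epsilon>\<^sup>2) * \<bar>q i\<bar>)"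
    using np by (intro mult_left_mono sum_mono term_bound[OF e t h] ee eh z) auto
  also have "\<dots> = (2 / \<epsilon>) * ((1 / real n) * (real n * t) + ((1 / real n) * (\<Sum>i<n. (qh i - q i)\<^sup>2)) / t) + (2 * \<eta> / \<epsilon>\<^sup>2) * ((1 / real n) * (\<Sum>i<n. \<bar>q i\<bar>))"
    by (simp add: sum.distrib sum_distrib_left sum_divide_distrib algebra_simps)
  also have "\<dots> = (2 / \<epsilon>) * (t + ((1 / real n) * (\<Sum>i<n. (qh i - q i)\<^sup>2)) / t) + (2 * \<eta> / \<epsilon>\<^sup>2) * ((1 / real n) * (\<Sum>i<n. \<bar>q i\<bar>))"
    using np by simp
  finally show ?thesis .
qed

theorem lemma4:
  fixes M :: "'a measure" and MX :: "'x measure"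
    and X :: "nat \<Rightarrow> 'a \<Rightarrow> 'x" and Y Z :: "nat \<Rightarrow> 'a \<Rightarrow> real"
    and e :: "'x \<Rightarrow> real" and \<kappa> :: "'x \<Rightarrow> real measure" and \<tau> \<epsilon> :: real
    and K :: nat and fold :: "nat \<Rightarrow> nat \<Rightarrow> nat"
    and Qhat :: "nat \<Rightarrow> nat \<Rightarrow> 'a \<Rightarrow> 'x \<Rightarrow> real"
    and ehat :: "nat \<Rightarrow> 'a \<Rightarrow> 'x \<Rightarrow> real"
  defines "W \<equiv> (\<lambda>i \<omega>. (X i \<omega>, Y i \<omega>, Z i \<omega>))"
    and "WXZ \<equiv> (\<lambda>i \<omega>. (X i \<omega>, Z i \<omega>))"
    and "Q \<equiv> cond_quantile \<kappa> \<tau>"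
  assumes M: "prob_space M"
    \<comment> \<open>i.i.d. sample (X_i, Y_i, Z_i), Z_i in {0,1}\<close>
    and W_meas: "\<And>i. W i \<in> M \<rightarrow>\<^sub>M (MX \<Otimes>\<^sub>M borel \<Otimes>\<^sub>M borel)"
    and W_indep: "prob_space.indep_vars M (\<lambda>_. MX \<Otimes>\<^sub>M borel \<Otimes>\<^sub>M borel) W UNIV"
    and W_ident: "\<And>i. distr M (MX \<Otimes>\<^sub>M borel \<Otimes>\<^sub>M borel) (W i) = distr M (MX \<Otimes>\<^sub>M borel \<Otimes>\<^sub>M borel) (W 0)"
    and Z_bin: "\<And>i \<omega>. \<omega> \<in> space M \<Longrightarrow> Z i \<omega> \<in> {0, 1}"
    \<comment> \<open>propensity score and conditional tau-quantile\<close>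
    and e_prop: "is_propensity M MX (X 0) (Z 0) e"
    and tau: "0 < \<tau>" "\<tau> < 1"
    and kappa: "is_cond_dist_kernel M MX (X 0) (Y 0) (Z 0) \<kappa>"
    \<comment> \<open>Condition 1\<close>
    and eps: "\<epsilon> > 0" "AE \<omega> in M. \<epsilon> \<le> e (X 0 \<omega>) \<and> e (X 0 \<omega>) \<le> 1 - \<epsilon>"
    and ehat_meas: "\<And>n. (\<lambda>(\<omega>, x). ehat n \<omega> x)
         \<in> borel_measurable (gen_sigma M WXZ (MX \<Otimes>\<^sub>M borel) {..<n} \<Otimes>\<^sub>M MX)"
    and ehat_unif: "\<And>\<delta>. \<delta> > 0 \<Longrightarrow> \<exists>A. (\<forall>n. A n \<in> sets M \<and>
         (\<forall>\<omega>\<in>A n. \<forall>x\<in>space MX. \<bar>ehat n \<omega> x - e x\<bar> \<le> \<delta>)) \<and> (\<lambda>n. measure M (A n)) \<longlonglongrightarrow> 1"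
    and Y_var: "integrable M (\<lambda>\<omega>. (Y 0 \<omega>)\<^sup>2)"
    \<comment> \<open>cross-fitting folds of approximately equal size\<close>
    and K: "K > 0"
    and fold_range: "\<And>n i. i < n \<Longrightarrow> fold n i < K"
    and fold_size: "\<And>k. k < K \<Longrightarrow>
         (\<lambda>n. real (card {i. i < n \<and> fold n i = k}) / real n) \<longlonglongrightarrow> 1 / real K"
    \<comment> \<open>Qhat_{-k} uses only observations outside fold k\<close>
    and Qhat_meas: "\<And>n k. k < K \<Longrightarrow> (\<lambda>(\<omega>, x). Qhat n k \<omega> x)
         \<in> borel_measurable (gen_sigma M W (MX \<Otimes>\<^sub>M borel \<Otimes>\<^sub>M borel) {i. i < n \<and> fold n i \<noteq> k} \<Otimes>\<^sub>M MX)"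
    \<comment> \<open>L2(P) consistency in probability of each Qhat_{-k} (squared norm)\<close>
    and Qhat_L2: "\<And>k \<delta>. k < K \<Longrightarrow> \<delta> > 0 \<Longrightarrow>
         (\<lambda>n. measure M {\<omega>\<in>space M. ennreal \<delta> <
            (\<integral>\<^sup>+ x. ennreal ((Qhat n k \<omega> x - Q x)\<^sup>2) \<partial>(distr M MX (X 0)))}) \<longlonglongrightarrow> 0"
  shows "conv_in_prob M (\<lambda>n \<omega>. sqrt ((1 / real n) *
            (\<Sum>i<n. (Qhat n (fold n i) \<omega> (X i \<omega>) - Q (X i \<omega>))\<^sup>2))) 0
       \<and> conv_in_prob M (\<lambda>n \<omega>. (1 / real n) *
            (\<Sum>i<n. Qhat n (fold n i) \<omega> (X i \<omega>) * Z i \<omega> / ehat n \<omega> (X i \<omega>)))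
            (\<integral>\<omega>. Q (X 0 \<omega>) \<partial>M)"
proof -
  interpret P: prob_space M by (rule M)
  let ?N = "MX \<Otimes>\<^sub>M borel \<Otimes>\<^sub>M borel"
  have Xm[measurable]: "X i \<in> M \<rightarrow>\<^sub>M MX" for i
    using measurable_compose[OF W_meas measurable_fst] by (simp add: W_def)
  have Ym[measurable]: "Y i \<in> borel_measurable M" for i
    using measurable_compose[OF measurable_compose[OF W_meas measurable_snd] measurable_fst] by (simp add: W_def)
  have Zm[measurable]: "Z i \<in> borel_measurable M" for i
    using measurable_compose[OF measurable_compose[OF W_meas measurable_snd] measurable_snd] by (simp add: W_def)
  have dist: "distr M L (\<lambda>\<omega>. h (W i \<omega>)) = distr M L (\<lambda>\<omega>. h (W 0 \<omega>))" if h: "h \<in> ?N \<rightarrow>\<^sub>M L" for i h and L :: "'b measure"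
  proof -
    have "distr M L (\<lambda>\<omega>. h (W i \<omega>)) = distr (distr M ?N (W i)) L h"
      using distr_distr[OF h W_meas[of i]] by (simp add: comp_def)
    also have "\<dots> = distr (distr M ?N (W 0)) L h" by (simp only: W_ident[of i])
    also have "\<dots> = distr M L (\<lambda>\<omega>. h (W 0 \<omega>))"
      using distr_distr[OF h W_meas[of 0]] by (simp add: comp_def)
    finally show ?thesis .
  qed
  have distX: "distr M MX (X i) = distr M MX (X 0)" for i
    using dist[of fst MX i] by (simp add: W_def)
  interpret qs: qsetup M MX "X 0" "Y 0" "Z 0" e \<kappa> \<tau> \<epsilon>
    by unfold_locales (use M Z_bin e_prop tau kappa eps Y_var in auto)
  have Qm[measurable]: "Q \<in> borel_measurable MX" unfolding Q_def by (rule qs.Qm)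

  define T where "T n \<omega> = (1 / real n) * (\<Sum>i<n. (Qhat n (fold n i) \<omega> (X i \<omega>) - Q (X i \<omega>))\<^sup>2)" for n \<omega>
  define Tk where "Tk k n \<omega> = (1 / real n) * (\<Sum>i\<in>{i. i < n \<and> fold n i = k}. (Qhat n k \<omega> (X i \<omega>) - Q (X i \<omega>))\<^sup>2)" for k n \<omega>
  have Hm: "(\<lambda>(\<omega>, x). (Qhat n k \<omega> x - Q x)\<^sup>2) \<in> borel_measurable (gen_sigma M W ?N {i. i < n \<and> fold n i \<noteq> k} \<Otimes>\<^sub>M MX)"
    if k: "k < K" for n k
  proof -
    have a: "(\<lambda>p. Qhat n k (fst p) (snd p)) \<in> borel_measurable (gen_sigma M W ?N {i. i < n \<and> fold n i \<noteq> k} \<Otimes>\<^sub>M MX)"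
      using Qhat_meas[OF k, of n] by (simp add: case_prod_unfold)
    have b: "(\<lambda>p. Q (snd p)) \<in> borel_measurable (gen_sigma M W ?N {i. i < n \<and> fold n i \<noteq> k} \<Otimes>\<^sub>M MX)"
      by (rule measurable_compose[OF measurable_snd Qm])
    have "(\<lambda>p. (Qhat n k (fst p) (snd p) - Q (snd p))\<^sup>2) \<in> borel_measurable (gen_sigma M W ?N {i. i < n \<and> fold n i \<noteq> k} \<Otimes>\<^sub>M MX)"
      using a b by (intro borel_measurable_power borel_measurable_diff)
    then show ?thesis by (simp add: case_prod_unfold)
  qed
  have termm: "(\<lambda>\<omega>. (Qhat n k \<omega> (X i \<omega>) - Q (X i \<omega>))\<^sup>2) \<in> borel_measurable M" if k: "k < K" for n k i
    using gen_sigma_comp_meas[OF W_meas Hm[OF k] Xm[of i]] by simp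
  have Tk_conv: "conv_in_prob M (Tk k) 0" if k: "k < K" for k
  proof -
    have "conv_in_prob M (\<lambda>n \<omega>. (1 / real n) * (\<Sum>i\<in>{i. i < n \<and> fold n i = k}. (\<lambda>n \<omega> x. (Qhat n k \<omega> x - Q x)\<^sup>2) n \<omega> (fst (W i \<omega>)))) 0"
    proof (rule fold_cip[where W=W and N="?N" and f=fst and MX=MX and PX="distr M MX (X 0)" and J="\<lambda>n. {i. i < n \<and> fold n i \<noteq> k}"])
      show "prob_space M" by (rule M)
      show "\<And>i. W i \<in> M \<rightarrow>\<^sub>M ?N" by (rule W_meas)
      show "prob_space.indep_vars M (\<lambda>_. ?N) W UNIV" by (rule W_indep)
      show "fst \<in> ?N \<rightarrow>\<^sub>M MX" by simp
      show "\<And>i. distr M MX (\<lambda>\<omega>. fst (W i \<omega>)) = distr M MX (X 0)" using distX by (simp add: W_def)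
      show "\<And>n. (\<lambda>(\<omega>, x). (\<lambda>n \<omega> x. (Qhat n k \<omega> x - Q x)\<^sup>2) n \<omega> x) \<in> borel_measurable (gen_sigma M W ?N {i. i < n \<and> fold n i \<noteq> k} \<Otimes>\<^sub>M MX)"
        using Hm[OF k] by simp
      show "\<And>n \<omega> x. 0 \<le> (\<lambda>n \<omega> x. (Qhat n k \<omega> x - Q x)\<^sup>2) n \<omega> x" by simp
      show "\<And>n. {i. i < n \<and> fold n i = k} \<subseteq> {..<n}" by auto
      show "\<And>n i. i \<in> {i. i < n \<and> fold n i = k} \<Longrightarrow> i \<notin> {i. i < n \<and> fold n i \<noteq> k}" by auto
      show "\<And>\<delta>. \<delta> > 0 \<Longrightarrow> (\<lambda>n. measure M {\<omega>\<in>space M. ennreal \<delta> < (\<integral>\<^sup>+x. ennreal ((\<lambda>n \<omega> x. (Qhat n k \<omega> x - Q x)\<^sup>2) n \<omega> x) \<partial>distr M MX (X 0))}) \<longlonglongrightarrow> 0"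
        using Qhat_L2[OF k] by simp
    qed
    then show ?thesis by (simp add: Tk_def[abs_def] W_def)
  qed
  have T_eq: "T n \<omega> = (\<Sum>k<K. Tk k n \<omega>)" for n \<omega>
  proof -
    have "(\<Sum>i<n. (Qhat n (fold n i) \<omega> (X i \<omega>) - Q (X i \<omega>))\<^sup>2)
        = (\<Sum>k<K. \<Sum>i\<in>{x\<in>{..<n}. fold n x = k}. (Qhat n (fold n i) \<omega> (X i \<omega>) - Q (X i \<omega>))\<^sup>2)"
      by (rule sum.group[symmetric]) (auto intro: fold_range)
    also have "\<dots> = (\<Sum>k<K. \<Sum>i\<in>{i. i < n \<and> fold n i = k}. (Qhat n k \<omega> (X i \<omega>) - Q (X i \<omega>))\<^sup>2)"
      by (intro sum.cong refl) auto
    finally show ?thesis unfolding T_def Tk_def by (simp add: sum_distrib_left)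
  qed
  have Tk_meas: "Tk k n \<in> borel_measurable M" if "k \<in> {..<K}" for k n
    unfolding Tk_def using termm that by (intro borel_measurable_times borel_measurable_sum) auto
  have T_conv: "conv_in_prob M T 0"
  proof -
    have "conv_in_prob M (\<lambda>n \<omega>. \<Sum>k\<in>{..<K}. Tk k n \<omega>) 0"
      by (rule cip_sum0) (use Tk_conv Tk_meas P.finite_measure_axioms in auto)
    then show ?thesis by (simp add: T_eq[abs_def])
  qed
  have T_nn: "0 \<le> T n \<omega>" for n \<omega> unfolding T_def by (intro mult_nonneg_nonneg sum_nonneg) auto
  have T_meas: "T n \<in> borel_measurable M" for n
    unfolding T_eq[abs_def] using Tk_meas by (intro borel_measurable_sum) auto
  have part1: "conv_in_prob M (\<lambda>n \<omega>. sqrt ((1 / real n) *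
            (\<Sum>i<n. (Qhat n (fold n i) \<omega> (X i \<omega>) - Q (X i \<omega>))\<^sup>2))) 0"
    using cip_sqrt[OF T_conv T_nn] by (simp add: T_def)

  define \<mu> where "\<mu> = (\<integral>\<omega>. Q (X 0 \<omega>) \<partial>M)"
  define V where "V i \<omega> = Q (X i \<omega>) * Z i \<omega> / e (X i \<omega>)" for i \<omega>
  define g3 where "g3 p = Q (fst p) * snd (snd p) / e (fst p)" for p :: "'x \<times> real \<times> real"
  have g3m: "g3 \<in> borel_measurable ?N" unfolding g3_def using qs.em by measurable
  have Vg: "V i = (\<lambda>\<omega>. g3 (W i \<omega>))" for i by (simp add: V_def g3_def W_def fun_eq_iff)
  have indV: "prob_space.indep_vars M (\<lambda>_. borel) V UNIV"
  proof -
    have Vg': "V = (\<lambda>i x. g3 (W i x))" using Vg by (intro ext) simp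
    show ?thesis using P.indep_vars_compose2[OF W_indep, of "\<lambda>_. g3" "\<lambda>_. borel"] g3m by (simp add: Vg')
  qed
  have identV: "distr M borel (V i) = distr M borel (V 0)" for i
    unfolding Vg using dist[OF g3m] .
  have wl: "conv_in_prob M (\<lambda>n \<omega>. (1 / real n) * (\<Sum>i<n. V i \<omega>)) \<mu>"
  proof -
    have "conv_in_prob M (\<lambda>n \<omega>. (1 / real n) * (\<Sum>i<n. V i \<omega>)) (\<integral>\<omega>. V 0 \<omega> \<partial>M)"
      by (rule wlln[OF M indV identV]) (use qs.V_L2 in \<open>simp add: V_def Q_def\<close>)
    moreover have "(\<integral>\<omega>. V 0 \<omega> \<partial>M) = \<mu>" using qs.V_mean by (simp add: V_def \<mu>_def Q_def)
    ultimately show ?thesis by simp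
  qed
  have Vm: "V i \<in> borel_measurable M" for i unfolding V_def using qs.em by measurable
  define q1 where "q1 = (\<integral>\<omega>. \<bar>Q (X 0 \<omega>)\<bar> \<partial>M)"
  have absQ: "integrable M (\<lambda>\<omega>. \<bar>Q (X i \<omega>)\<bar>) \<and> (\<integral>\<omega>. \<bar>Q (X i \<omega>)\<bar> \<partial>M) = q1" for i
  proof -
    have I0: "integrable M (\<lambda>\<omega>. \<bar>Q (X 0 \<omega>)\<bar>)" using qs.Q_L1 by (simp add: Q_def)
    have "integrable M (\<lambda>\<omega>. \<bar>Q (X i \<omega>)\<bar>) \<longleftrightarrow> integrable (distr M MX (X i)) (\<lambda>x. \<bar>Q x\<bar>)"
      by (simp add: integrable_distr_eq)
    also have "\<dots> \<longleftrightarrow> integrable (distr M MX (X 0)) (\<lambda>x. \<bar>Q x\<bar>)" by (simp only: distX[of i])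
    also have "\<dots> \<longleftrightarrow> integrable M (\<lambda>\<omega>. \<bar>Q (X 0 \<omega>)\<bar>)" by (simp add: integrable_distr_eq)
    finally have Ii: "integrable M (\<lambda>\<omega>. \<bar>Q (X i \<omega>)\<bar>)" using I0 by simp
    have "(\<integral>\<omega>. \<bar>Q (X i \<omega>)\<bar> \<partial>M) = (\<integral>x. \<bar>Q x\<bar> \<partial>distr M MX (X i))" by (simp add: integral_distr)
    also have "\<dots> = (\<integral>x. \<bar>Q x\<bar> \<partial>distr M MX (X 0))" by (simp only: distX[of i])
    also have "\<dots> = q1" by (simp add: integral_distr q1_def)
    finally show ?thesis using Ii by simp
  qed
  have q1nn: "0 \<le> q1" unfolding q1_def by simp
  define L where "L n \<omega> = (1 / real n) * (\<Sum>i<n. \<bar>Q (X i \<omega>)\<bar>)" for n \<omega>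
  have L_int: "integrable M (L n)" for n unfolding L_def using absQ by auto
  have L_nn: "0 \<le> L n \<omega>" for n \<omega> unfolding L_def by (intro mult_nonneg_nonneg sum_nonneg) auto
  have L_E: "(\<integral>\<omega>. L n \<omega> \<partial>M) \<le> q1" for n
  proof -
    have "(\<integral>\<omega>. L n \<omega> \<partial>M) = (1 / real n) * (\<Sum>i<n. q1)"
      unfolding L_def using absQ by (simp add: Bochner_Integration.integral_sum)
    also have "\<dots> \<le> q1" using q1nn by (cases "n = 0") auto
    finally show ?thesis .
  qed
  have L_meas: "L n \<in> borel_measurable M" for n unfolding L_def by measurable
  define Gc where "Gc = {\<omega>\<in>space M. \<not> (\<forall>i. \<epsilon> \<le> e (X i \<omega>))}"
  have Gc_m: "Gc \<in> sets M" unfolding Gc_def using qs.em by measurable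
  have AEi: "AE \<omega> in M. \<epsilon> \<le> e (X i \<omega>)" for i
  proof -
    have em: "{x \<in> space MX. \<epsilon> \<le> e x} \<in> sets MX" using qs.em by measurable
    have "AE \<omega> in M. \<epsilon> \<le> e (X 0 \<omega>)" by (rule qs.e_ae(2))
    then have "AE x in distr M MX (X 0). \<epsilon> \<le> e x" by (subst AE_distr_iff[OF Xm em])
    then have "AE x in distr M MX (X i). \<epsilon> \<le> e x" by (simp only: distX[of i])
    then show ?thesis by (subst (asm) AE_distr_iff[OF Xm em])
  qed
  have "AE \<omega> in M. \<forall>i. \<epsilon> \<le> e (X i \<omega>)" using AEi by (simp add: AE_all_countable)
  then have Gc0: "measure M Gc = 0"
    using AE_iff_measurable[OF Gc_m] Gc_def by (simp add: measure_def)
  have part2: "conv_in_prob M (\<lambda>n \<omega>. (1 / real n) *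
            (\<Sum>i<n. Qhat n (fold n i) \<omega> (X i \<omega>) * Z i \<omega> / ehat n \<omega> (X i \<omega>))) \<mu>"
  proof (rule cip_I)
    fix \<delta> \<eta> :: real assume d: "\<delta> > 0" and et: "\<eta> > 0"
    have ep: "\<epsilon> > 0" by (rule eps(1))
    define t where "t = \<delta> * \<epsilon> / 12"
    have tp: "t > 0" using d ep by (simp add: t_def)
    define K0 where "K0 = 4 * q1 / \<eta> + 1"
    have K0p: "K0 > 0" using q1nn et by (simp add: K0_def add_nonneg_pos)
    define h where "h = min (\<epsilon> / 2) (\<delta> * \<epsilon>\<^sup>2 / (6 * K0))"
    have hp: "h > 0" using ep d K0p by (simp add: h_def)
    obtain A where A: "\<And>n. A n \<in> sets M" "\<And>n \<omega> x. \<omega> \<in> A n \<Longrightarrow> x \<in> space MX \<Longrightarrow> \<bar>ehat n \<omega> x - e x\<bar> \<le> h"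
      and Alim: "(\<lambda>n. measure M (A n)) \<longlonglongrightarrow> 1"
      using ehat_unif[OF hp] by blast
    have e1: "eventually (\<lambda>n. measure M {\<omega>\<in>space M. \<delta> / 3 < \<bar>(1 / real n) * (\<Sum>i<n. V i \<omega>) - \<mu>\<bar>} < \<eta> / 4) sequentially"
      by (rule cip_D[OF wl]) (use d et in auto)
    have e2: "eventually (\<lambda>n. measure M {\<omega>\<in>space M. t\<^sup>2 < \<bar>T n \<omega> - 0\<bar>} < \<eta> / 4) sequentially"
      by (rule cip_D[OF T_conv]) (use tp et in auto)
    have e3: "eventually (\<lambda>n. 1 - measure M (A n) < \<eta> / 4) sequentially"
      by (rule tendsto1_D[OF Alim]) (use et in auto)
    show "eventually (\<lambda>n. measure M {\<omega>\<in>space M. \<delta> < \<bar>(1 / real n) *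
            (\<Sum>i<n. Qhat n (fold n i) \<omega> (X i \<omega>) * Z i \<omega> / ehat n \<omega> (X i \<omega>)) - \<mu>\<bar>} \<le> \<eta>) sequentially"
      using e1 e2 e3
    proof eventually_elim
      fix n
      assume n1: "measure M {\<omega>\<in>space M. \<delta> / 3 < \<bar>(1 / real n) * (\<Sum>i<n. V i \<omega>) - \<mu>\<bar>} < \<eta> / 4"
        and n2: "measure M {\<omega>\<in>space M. t\<^sup>2 < \<bar>T n \<omega> - 0\<bar>} < \<eta> / 4"
        and n3: "1 - measure M (A n) < \<eta> / 4"
      define R where "R \<omega> = (1 / real n) * (\<Sum>i<n. Qhat n (fold n i) \<omega> (X i \<omega>) * Z i \<omega> / ehat n \<omega> (X i \<omega>))" for \<omega>
      define B1 where "B1 = {\<omega>\<in>space M. \<delta> / 3 < \<bar>(1 / real n) * (\<Sum>i<n. V i \<omega>) - \<mu>\<bar>}"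
      define B2 where "B2 = {\<omega>\<in>space M. t\<^sup>2 < \<bar>T n \<omega> - 0\<bar>}"
      define B3 where "B3 = {\<omega>\<in>space M. K0 \<le> L n \<omega>}"
      define B4 where "B4 = space M - A n"
      have B1m: "B1 \<in> sets M" unfolding B1_def using Vm by measurable
      have B2m: "B2 \<in> sets M" unfolding B2_def using T_meas by measurable
      have B3m: "B3 \<in> sets M" unfolding B3_def using L_meas by measurable
      have B4m: "B4 \<in> sets M" unfolding B4_def using A(1) by auto
      have sub: "{\<omega>\<in>space M. \<delta> < \<bar>R \<omega> - \<mu>\<bar>} \<subseteq> B1 \<union> B2 \<union> B3 \<union> B4 \<union> Gc"
      proof
        fix \<omega> assume w: "\<omega> \<in> {\<omega>\<in>space M. \<delta> < \<bar>R \<omega> - \<mu>\<bar>}"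
        show "\<omega> \<in> B1 \<union> B2 \<union> B3 \<union> B4 \<union> Gc"
        proof (rule ccontr)
          assume "\<omega> \<notin> B1 \<union> B2 \<union> B3 \<union> B4 \<union> Gc"
          then have wM: "\<omega> \<in> space M" and c1: "\<bar>(1 / real n) * (\<Sum>i<n. V i \<omega>) - \<mu>\<bar> \<le> \<delta> / 3"
            and c2: "T n \<omega> \<le> t\<^sup>2" and c3: "L n \<omega> < K0" and c4: "\<omega> \<in> A n"
            and c5: "\<And>i. \<epsilon> \<le> e (X i \<omega>)"
            using w T_nn[of n \<omega>] by (auto simp: B1_def B2_def B3_def B4_def Gc_def)
          have XS: "X i \<omega> \<in> space MX" for i using measurable_space[OF Xm wM] .
          have sb: "\<bar>(1 / real n) * (\<Sum>i<n. Qhat n (fold n i) \<omega> (X i \<omega>) * Z i \<omega> / ehat n \<omega> (X i \<omega>))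
                - (1 / real n) * (\<Sum>i<n. Q (X i \<omega>) * Z i \<omega> / e (X i \<omega>))\<bar>
             \<le> (2 / \<epsilon>) * (t + ((1 / real n) * (\<Sum>i<n. (Qhat n (fold n i) \<omega> (X i \<omega>) - Q (X i \<omega>))\<^sup>2)) / t)
               + (2 * h / \<epsilon>\<^sup>2) * ((1 / real n) * (\<Sum>i<n. \<bar>Q (X i \<omega>)\<bar>))"
          proof (rule sum_bound[OF ep tp])
            show "0 \<le> h" using hp by simp
            show "h \<le> \<epsilon> / 2" by (simp add: h_def)
            show "\<And>i. i < n \<Longrightarrow> \<epsilon> \<le> e (X i \<omega>)" using c5 by simp
            show "\<And>i. i < n \<Longrightarrow> \<bar>ehat n \<omega> (X i \<omega>) - e (X i \<omega>)\<bar> \<le> h" using A(2)[OF c4 XS] by simp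
            show "\<bar>Z i \<omega>\<bar> \<le> 1" if "i < n" for i
            proof -
              have "Z i \<omega> \<in> {0, 1}" by (rule Z_bin[OF wM])
              then show ?thesis by auto
            qed
          qed
          have sb1: "(2 / \<epsilon>) * (t + T n \<omega> / t) \<le> \<delta> / 3"
          proof -
            have "T n \<omega> / t \<le> t\<^sup>2 / t" using c2 tp by (simp add: divide_right_mono)
            then have "t + T n \<omega> / t \<le> 2 * t" using tp by (simp add: power2_eq_square)
            then have "(2 / \<epsilon>) * (t + T n \<omega> / t) \<le> (2 / \<epsilon>) * (2 * t)" using ep by (intro mult_left_mono) auto
            also have "\<dots> = \<delta> / 3" using ep by (simp add: t_def field_simps)
            finally show ?thesis .
          qed
          have sb2: "(2 * h / \<epsilon>\<^sup>2) * L n \<omega> \<le> \<delta> / 3"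
          proof -
            have "(2 * h / \<epsilon>\<^sup>2) * L n \<omega> \<le> (2 * h / \<epsilon>\<^sup>2) * K0"
              using c3 hp ep by (intro mult_left_mono) auto
            also have "\<dots> \<le> (2 * (\<delta> * \<epsilon>\<^sup>2 / (6 * K0)) / \<epsilon>\<^sup>2) * K0"
              using K0p ep by (intro mult_right_mono divide_right_mono) (auto simp: h_def)
            also have "\<dots> = \<delta> / 3" using K0p ep by (simp add: field_simps)
            finally show ?thesis .
          qed
          have "\<bar>R \<omega> - \<mu>\<bar> \<le> \<bar>R \<omega> - (1 / real n) * (\<Sum>i<n. V i \<omega>)\<bar> + \<bar>(1 / real n) * (\<Sum>i<n. V i \<omega>) - \<mu>\<bar>"
            using abs_triangle_ineq[of "R \<omega> - (1 / real n) * (\<Sum>i<n. V i \<omega>)" "(1 / real n) * (\<Sum>i<n. V i \<omega>) - \<mu>"] by simp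
          also have "\<dots> \<le> ((2 / \<epsilon>) * (t + T n \<omega> / t) + (2 * h / \<epsilon>\<^sup>2) * L n \<omega>) + \<delta> / 3"
            using sb c1 by (intro add_mono) (simp_all add: R_def V_def T_def L_def)
          also have "\<dots> \<le> \<delta>" using add_mono[OF sb1 sb2] by linarith
          finally show False using w by simp
        qed
      qed
      have mB3: "measure M B3 \<le> \<eta> / 4"
      proof -
        have "measure M B3 \<le> (\<integral>\<omega>. L n \<omega> \<partial>M) / K0"
          unfolding B3_def by (rule integral_Markov_inequality_measure[OF L_int]) (use K0p L_nn in auto)
        also have "\<dots> \<le> q1 / K0" using L_E K0p by (simp add: divide_right_mono)
        also have "\<dots> \<le> \<eta> / 4"
        proof -
          have "q1 \<le> \<eta> / 4 * K0" using et by (simp add: K0_def field_simps)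
          then show ?thesis using K0p by (simp add: divide_le_eq)
        qed
        finally show ?thesis .
      qed
      have mB4: "measure M B4 < \<eta> / 4" unfolding B4_def using n3 P.prob_compl[OF A(1)] by simp
      have "measure M {\<omega>\<in>space M. \<delta> < \<bar>R \<omega> - \<mu>\<bar>} \<le> measure M (B1 \<union> B2 \<union> B3 \<union> B4 \<union> Gc)"
        using sub B1m B2m B3m B4m Gc_m by (intro P.finite_measure_mono) auto
      also have "\<dots> \<le> measure M (B1 \<union> B2 \<union> B3 \<union> B4) + measure M Gc"
        using B1m B2m B3m B4m Gc_m by (intro measure_Un_le) auto
      also have "\<dots> \<le> measure M (B1 \<union> B2 \<union> B3) + measure M B4 + measure M Gc"
        using B1m B2m B3m B4m by (simp add: measure_Un_le)
      also have "\<dots> \<le> measure M (B1 \<union> B2) + measure M B3 + measure M B4 + measure M Gc"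
        using B1m B2m B3m by (simp add: measure_Un_le)
      also have "\<dots> \<le> measure M B1 + measure M B2 + measure M B3 + measure M B4 + measure M Gc"
        using B1m B2m by (simp add: measure_Un_le)
      also have "\<dots> \<le> \<eta>" using n1 n2 mB3 mB4 Gc0 by (simp add: B1_def B2_def)
      finally show "measure M {\<omega>\<in>space M. \<delta> < \<bar>(1 / real n) *
            (\<Sum>i<n. Qhat n (fold n i) \<omega> (X i \<omega>) * Z i \<omega> / ehat n \<omega> (X i \<omega>)) - \<mu>\<bar>} \<le> \<eta>"
        by (simp add: R_def)
    qed
  qed
  show ?thesis using part1 part2 by (simp add: \<mu>_def)
qed

end
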